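(* Let $M_\varphi$ be a hyperbolic once-punctured torus bundle with fibre $S$, and let $\overline\rho\colon\pi_1(S)\to\mathrm{PSL}(2,\mathbb{C})$ be irreducible. If $\chi_{\overline\rho}\in\mathrm{im}(\overline r)$ and $|C(\mathrm{im}(\overline\rho))|=2$, then $|\overline r^{-1}(\chi_{\overline\rho})|=2$ and $b_1(\varphi)>1$. Moreover, either no character in $\overline r^{-1}(\chi_{\overline\rho})$ lifts to $X(M_\varphi)$; or exactly one lifts and $b_1(\varphi)=3$; or two of them lift and $b_1(\varphi)=2$.
   Context: $\pi_1(M_\varphi)=\langle t,a,b\mid t^{-1}at=\varphi(a),t^{-1}bt=\varphi(b)\rangle$ with $a,b$ free generators of $\pi_1(S)$; $b_1(\varphi)=\dim_{\mathbb{Z}_2}H_1(M_\varphi;\mathbb{Z}_2)$. $\overline X(N)$ is the $\mathrm{PSL}(2,\mathbb{C})$-character variety, $X(N)$ the $\mathrm{SL}(2,\mathbb{C})$-character variety; a character in $\overline X(M_\varphi)$ lifts to $X(M_\varphi)$ if it is the image of a point of $X(M_\varphi)$ under the map induced by $\mathrm{SL}(2,\mathbb{C})\to\mathrm{PSL}(2,\mathbb{C})$. $\overline r\colon\overline X(M_\varphi)\to\overline X(S)$ is restriction to $\pi_1(S)$. $C(\cdot)$ denotes centraliser in $\mathrm{PSL}(2,\mathbb{C})$. *)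

theory Defs
  imports "HOL-Analysis.Analysis"
begin

section \<open>Words: generators a, b of pi_1(S) and t of pi_1(M_phi)\<close>

datatype gen = Ga | Gb | Gt

type_synonym letter = "gen \<times> bool"   (* (g, False) = g, (g, True) = g^-1 *)
type_synonym word = "letter list"

definition letters :: "word \<Rightarrow> gen set" where
  "letters w = fst ` set w"

definition surface_word :: "word \<Rightarrow> bool" where
  "surface_word w \<longleftrightarrow> letters w \<subseteq> {Ga, Gb}"

definition winv :: "word \<Rightarrow> word" where
  "winv w = rev (map (\<lambda>(g, e). (g, \<not> e)) w)"

definition wsubst :: "(gen \<Rightarrow> word) \<Rightarrow> word \<Rightarrow> word" where
  "wsubst \<phi> w = concat (map (\<lambda>(g, e). if e then winv (\<phi> g) else \<phi> g) w)"

fun red :: "word \<Rightarrow> word" where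
  "red [] = []"
| "red (x # xs) = (case red xs of
      [] \<Rightarrow> [x]
    | y # ys \<Rightarrow> (if fst y = fst x \<and> snd y \<noteq> snd x then ys else x # y # ys))"

definition is_aut_F2 :: "(gen \<Rightarrow> word) \<Rightarrow> bool" where
  "is_aut_F2 \<phi> \<longleftrightarrow> surface_word (\<phi> Ga) \<and> surface_word (\<phi> Gb) \<and>
     (\<exists>\<psi>. surface_word (\<psi> Ga) \<and> surface_word (\<psi> Gb) \<and>
        (\<forall>g\<in>{Ga, Gb}. red (wsubst \<psi> (\<phi> g)) = [(g, False)] \<and>
                       red (wsubst \<phi> (\<psi> g)) = [(g, False)]))"

text \<open>Exponent sums and the induced matrix on H_1(S;Z) = Z^2.\<close>
definition expsum :: "gen \<Rightarrow> word \<Rightarrow> int" where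
  "expsum g w = (\<Sum>x\<leftarrow>w. if fst x = g then (if snd x then -1 else 1) else 0)"

definition ab_trace :: "(gen \<Rightarrow> word) \<Rightarrow> int" where
  "ab_trace \<phi> = expsum Ga (\<phi> Ga) + expsum Gb (\<phi> Gb)"

definition ab_det :: "(gen \<Rightarrow> word) \<Rightarrow> int" where
  "ab_det \<phi> = expsum Ga (\<phi> Ga) * expsum Gb (\<phi> Gb) - expsum Gb (\<phi> Ga) * expsum Ga (\<phi> Gb)"

text \<open>M_phi is a hyperbolic (orientable) once-punctured torus bundle: phi is an automorphism
  of pi_1(S) = F(a,b) whose action on H_1 is in SL(2,Z) with |trace| > 2 (Anosov; Thurston).\<close>
definition hyperbolic_bundle :: "(gen \<Rightarrow> word) \<Rightarrow> bool" where
  "hyperbolic_bundle \<phi> \<longleftrightarrow> is_aut_F2 \<phi> \<and> ab_det \<phi> = 1 \<and> \<bar>ab_trace \<phi>\<bar> > 2"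

text \<open>Homomorphisms pi_1(M_phi) \<rightarrow> Z_2 (Z_2 = bool with xor). Their number is
  2^(dim H^1(M_phi;Z_2)) = 2^(dim H_1(M_phi;Z_2)).\<close>
definition wpar :: "(gen \<Rightarrow> bool) \<Rightarrow> word \<Rightarrow> bool" where
  "wpar h w = foldr (\<lambda>x acc. h (fst x) \<noteq> acc) w False"

definition hom_Z2 :: "(gen \<Rightarrow> word) \<Rightarrow> (bool \<times> bool \<times> bool) set" where
  "hom_Z2 \<phi> = {(ta, xa, yb). let h = (\<lambda>g. case g of Ga \<Rightarrow> xa | Gb \<Rightarrow> yb | Gt \<Rightarrow> ta) in
        wpar h (\<phi> Ga) = xa \<and> wpar h (\<phi> Gb) = yb}"

definition b1 :: "(gen \<Rightarrow> word) \<Rightarrow> nat" where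
  "b1 \<phi> = (THE n. card (hom_Z2 \<phi>) = 2 ^ n)"

type_synonym mat2 = "complex^2^2"

fun eval :: "(gen \<Rightarrow> mat2) \<Rightarrow> word \<Rightarrow> mat2" where
  "eval f [] = mat 1"
| "eval f (x # xs) = (if snd x then matrix_inv (f (fst x)) else f (fst x)) ** eval f xs"

definition SL2 :: "mat2 set" where
  "SL2 = {X. det X = 1}"

definition sl_rep_M :: "(gen \<Rightarrow> word) \<Rightarrow> (gen \<Rightarrow> mat2) \<Rightarrow> bool" where
  "sl_rep_M \<phi> f \<longleftrightarrow> (\<forall>g. f g \<in> SL2) \<and>
     (\<forall>g\<in>{Ga, Gb}. matrix_inv (f Gt) ** f g ** f Gt = eval f (\<phi> g))"

text \<open>Representation pi_1(M_phi) \<rightarrow> PSL(2,C), described by SL(2,C) lifts of the images of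
  the generators; the relations hold in PSL(2,C), i.e. up to sign.\<close>
definition psl_rep_M :: "(gen \<Rightarrow> word) \<Rightarrow> (gen \<Rightarrow> mat2) \<Rightarrow> bool" where
  "psl_rep_M \<phi> f \<longleftrightarrow> (\<forall>g. f g \<in> SL2) \<and>
     (\<forall>g\<in>{Ga, Gb}. matrix_inv (f Gt) ** f g ** f Gt = eval f (\<phi> g) \<or>
                    matrix_inv (f Gt) ** f g ** f Gt = - eval f (\<phi> g))"

text \<open>PSL(2,C)-character: gamma \<mapsto> tr^2 (well defined on PSL(2,C)).\<close>
definition pchar_M :: "(gen \<Rightarrow> mat2) \<Rightarrow> word \<Rightarrow> complex" where
  "pchar_M f = (\<lambda>w. (trace (eval f w))\<^sup>2)"

definition Xbar_M :: "(gen \<Rightarrow> word) \<Rightarrow> (word \<Rightarrow> complex) set" where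
  "Xbar_M \<phi> = {pchar_M f | f. psl_rep_M \<phi> f}"

text \<open>Characters on pi_1(S): only defined on surface words (0 elsewhere by convention).\<close>
definition restrS :: "(word \<Rightarrow> complex) \<Rightarrow> word \<Rightarrow> complex" where
  "restrS c = (\<lambda>w. if surface_word w then c w else 0)"

definition surf_assign :: "mat2 \<Rightarrow> mat2 \<Rightarrow> gen \<Rightarrow> mat2" where
  "surf_assign A B = (\<lambda>g. case g of Ga \<Rightarrow> A | Gb \<Rightarrow> B | Gt \<Rightarrow> mat 1)"

text \<open>Character of the PSL(2,C)-representation of pi_1(S) given by a \<mapsto> \<pm>A, b \<mapsto> \<pm>B.\<close>
definition pchar_S :: "mat2 \<Rightarrow> mat2 \<Rightarrow> word \<Rightarrow> complex" where
  "pchar_S A B = restrS (pchar_M (surf_assign A B))"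

definition rbar :: "(word \<Rightarrow> complex) \<Rightarrow> word \<Rightarrow> complex" where
  "rbar c = restrS c"

definition fibre :: "(gen \<Rightarrow> word) \<Rightarrow> (word \<Rightarrow> complex) \<Rightarrow> (word \<Rightarrow> complex) set" where
  "fibre \<phi> c0 = {c \<in> Xbar_M \<phi>. rbar c = c0}"

definition lifts :: "(gen \<Rightarrow> word) \<Rightarrow> (word \<Rightarrow> complex) \<Rightarrow> bool" where
  "lifts \<phi> c \<longleftrightarrow> (\<exists>f. sl_rep_M \<phi> f \<and> pchar_M f = c)"

definition irreducible2 :: "mat2 \<Rightarrow> mat2 \<Rightarrow> bool" where
  "irreducible2 A B \<longleftrightarrow> \<not> (\<exists>v::complex^2. v \<noteq> 0 \<and> (\<exists>l m. A *v v = l *s v \<and> B *v v = m *s v))"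

text \<open>PSL(2,C) elements as classes {X, -X}; centraliser of the image of rhobar in PSL(2,C).\<close>
definition psl_class :: "mat2 \<Rightarrow> mat2 set" where
  "psl_class X = {X, - X}"

definition centraliser_img :: "mat2 \<Rightarrow> mat2 \<Rightarrow> mat2 set set" where
  "centraliser_img A B = {psl_class X | X. X \<in> SL2 \<and>
     (\<forall>w. surface_word w \<longrightarrow>
        X ** eval (surf_assign A B) w = eval (surf_assign A B) w ** X \<or>
        X ** eval (surf_assign A B) w = - (eval (surf_assign A B) w ** X))}"

end

theory Submission
  imports Defs
begin

lemma mat2_eq_iff: "(X::mat2) = Y \<longleftrightarrow> X$1$1 = Y$1$1 \<and> X$1$2 = Y$1$2 \<and> X$2$1 = Y$2$1 \<and> X$2$2 = Y$2$2"
  by (auto simp: vec_eq_iff forall_2)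

lemma vec2_eq_iff: "(x::complex^2) = y \<longleftrightarrow> x$1 = y$1 \<and> x$2 = y$2"
  by (auto simp: vec_eq_iff forall_2)

lemma mm_entries:
  fixes X Y :: mat2
  shows "(X ** Y)$1$1 = X$1$1 * Y$1$1 + X$1$2 * Y$2$1"
    "(X ** Y)$1$2 = X$1$1 * Y$1$2 + X$1$2 * Y$2$2"
    "(X ** Y)$2$1 = X$2$1 * Y$1$1 + X$2$2 * Y$2$1"
    "(X ** Y)$2$2 = X$2$1 * Y$1$2 + X$2$2 * Y$2$2"
  by (simp_all add: matrix_matrix_mult_def sum_2)

lemma mv_entries:
  fixes X :: mat2 and v :: "complex^2"
  shows "(X *v v)$1 = X$1$1 * v$1 + X$1$2 * v$2"
    "(X *v v)$2 = X$2$1 * v$1 + X$2$2 * v$2"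
  by (simp_all add: matrix_vector_mult_def sum_2)

lemma matc_entries: "(mat c::mat2)$1$1 = c" "(mat c::mat2)$1$2 = 0" "(mat c::mat2)$2$1 = 0" "(mat c::mat2)$2$2 = c"
  by (simp_all add: mat_def)

lemma trace2: "trace (X::mat2) = X$1$1 + X$2$2"
  by (simp add: trace_def sum_2)

definition adj2 :: "mat2 \<Rightarrow> mat2" where
  "adj2 X = (\<chi> i j. if i = 1 \<and> j = 1 then X$2$2 else if i = 1 \<and> j = 2 then - X$1$2
     else if i = 2 \<and> j = 1 then - X$2$1 else X$1$1)"

lemma adj2_entries: "(adj2 X)$1$1 = X$2$2" "(adj2 X)$1$2 = - X$1$2" "(adj2 X)$2$1 = - X$2$1" "(adj2 X)$2$2 = X$1$1"
  by (simp_all add: adj2_def)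

lemmas E = mat2_eq_iff vec2_eq_iff mm_entries mv_entries matc_entries det_2 trace2 adj2_entries
   vector_scalar_mult_def

lemma matrix_inv_unique:
  fixes X Y :: mat2
  assumes "X ** Y = mat 1" "Y ** X = mat 1"
  shows "matrix_inv X = Y"
proof -
  have ex: "\<exists>Y'. X ** Y' = mat 1 \<and> Y' ** X = mat 1" using assms by blast
  define Z where "Z = matrix_inv X"
  have Z: "X ** Z = mat 1 \<and> Z ** X = mat 1"
    unfolding Z_def matrix_inv_def by (rule someI_ex[OF ex])
  have "Z = Z ** (X ** Y)" using assms by simp
  also have "\<dots> = (Z ** X) ** Y" by (simp add: matrix_mul_assoc)
  also have "\<dots> = Y" using Z by simp
  finally show ?thesis unfolding Z_def .
qed

lemma adj2_right: "(X::mat2) ** adj2 X = mat (det X)"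
  by (simp add: E algebra_simps)
lemma adj2_left: "adj2 (X::mat2) ** X = mat (det X)"
  by (simp add: E algebra_simps)

lemma matrix_inv_SL2:
  fixes X :: mat2
  assumes "det X = 1"
  shows "matrix_inv X = adj2 X"
  by (rule matrix_inv_unique) (simp_all add: adj2_right adj2_left assms)

lemma det_adj2[simp]: "det (adj2 X) = det X" by (simp add: E algebra_simps)
lemma adj2_neg[simp]: "adj2 (- X) = - adj2 X" by (simp add: E)
lemma adj2_adj2[simp]: "adj2 (adj2 X) = X" by (simp add: E)
lemma adj2_mult: "adj2 ((X::mat2) ** Y) = adj2 Y ** adj2 X" by (simp add: E algebra_simps)
lemma adj2_one[simp]: "adj2 (mat 1) = mat 1" by (simp add: E)
lemma det_neg2[simp]: "det (- X :: mat2) = det X" by (simp add: E algebra_simps)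
lemma trace_neg2[simp]: "trace (- X :: mat2) = - trace X" by (simp add: E)
lemma mult_neg_left2[simp]: "(- (X::mat2)) ** (Y::mat2) = - (X ** Y)" by (simp add: E)
lemma mult_neg_right2[simp]: "(X::mat2) ** (- Y::mat2) = - (X ** Y)" by (simp add: E)
lemma det_mult2: "det ((X::mat2) ** Y) = det X * det Y" by (rule det_mul)
lemma neg_neq_self: "det (X::mat2) \<noteq> 0 \<Longrightarrow> - X \<noteq> X"
  by (auto simp: E)
lemma neg_neq_self': "det (X::mat2) \<noteq> 0 \<Longrightarrow> X \<noteq> - X"
  by (auto simp: E)
lemma mat1_neq_neg: "(mat 1::mat2) \<noteq> - mat 1" by (simp add: E)

lemma adj_left1: "det (X::mat2) = 1 \<Longrightarrow> adj2 X ** X = mat 1" by (simp add: adj2_left)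
lemma adj_right1: "det (X::mat2) = 1 \<Longrightarrow> X ** adj2 X = mat 1" by (simp add: adj2_right)

lemma adj_cancel_left: "det (X::mat2) = 1 \<Longrightarrow> adj2 X ** (X ** Y) = Y"
  by (simp add: matrix_mul_assoc adj2_left)
lemma adj_cancel_right: "det (X::mat2) = 1 \<Longrightarrow> X ** (adj2 X ** Y) = Y"
  by (simp add: matrix_mul_assoc adj2_right)

lemma trace_cyc: "trace ((X::mat2) ** (Y::mat2)) = trace (Y ** X)"
  by (rule trace_mul_sym)

lemma trace_conj: "det (P::mat2) = 1 \<Longrightarrow> trace (adj2 P ** (X::mat2) ** P) = trace X"
proof -
  assume "det P = 1"
  have "trace (adj2 P ** X ** P) = trace (P ** (adj2 P ** X))" by (rule trace_cyc)
  also have "\<dots> = trace X" using \<open>det P = 1\<close> by (simp add: adj_cancel_right)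
  finally show ?thesis .
qed

lemma CH2: "det (X::mat2) = 1 \<Longrightarrow> X ** X = mat (trace X) ** X - mat 1"
  by (simp add: E algebra_simps)

lemma trace_XXY: "det (X::mat2) = 1 \<Longrightarrow> trace (X ** X ** (Y::mat2)) = trace X * trace (X ** Y) - trace Y"
  by (simp add: E) algebra

definition sl :: "(gen \<Rightarrow> mat2) \<Rightarrow> bool" where
  "sl f \<longleftrightarrow> (\<forall>g. det (f g) = 1)"

definition let_mat :: "(gen \<Rightarrow> mat2) \<Rightarrow> letter \<Rightarrow> mat2" where
  "let_mat f x = (if snd x then adj2 (f (fst x)) else f (fst x))"

lemma eval_Cons_sl: "sl f \<Longrightarrow> eval f (x # xs) = let_mat f x ** eval f xs"
  by (simp add: sl_def let_mat_def matrix_inv_SL2)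

lemma det_let_mat: "sl f \<Longrightarrow> det (let_mat f x) = 1"
  by (simp add: sl_def let_mat_def)

lemma eval_append: "eval f (u @ v) = eval f u ** eval f v"
  by (induction u) (simp_all add: matrix_mul_assoc)

lemma det_eval: "sl f \<Longrightarrow> det (eval f w) = 1"
  by (induction w) (simp_all add: eval_Cons_sl det_mult2 det_let_mat del: eval.simps(2))

lemma eval_winv: "sl f \<Longrightarrow> eval f (winv w) = adj2 (eval f w)"
proof (induction w)
  case Nil
  then show ?case by (simp add: winv_def)
next
  case (Cons x xs)
  obtain g e where x: "x = (g, e)" by force
  have w: "winv (x # xs) = winv xs @ [(g, \<not> e)]" by (simp add: winv_def x)
  have l: "let_mat f (g, \<not> e) = adj2 (let_mat f x)" by (simp add: let_mat_def x)
  show ?case using Cons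
    by (simp add: w eval_append eval_Cons_sl[OF Cons.prems] l adj2_mult del: eval.simps(2))
qed

lemma wsubst_Nil[simp]: "wsubst \<phi> [] = []" by (simp add: wsubst_def)
lemma wsubst_Cons: "wsubst \<phi> (x # xs) = (if snd x then winv (\<phi> (fst x)) else \<phi> (fst x)) @ wsubst \<phi> xs"
  by (simp add: wsubst_def split: prod.split)

lemma sl_evalf: "sl f \<Longrightarrow> sl (\<lambda>g. eval f (\<phi> g))"
  by (simp add: sl_def det_eval)

lemma eval_wsubst: "sl f \<Longrightarrow> eval f (wsubst \<phi> w) = eval (\<lambda>g. eval f (\<phi> g)) w"
proof (induction w)
  case Nil
  then show ?case by simp
next
  case (Cons x xs)
  have "eval f (if snd x then winv (\<phi> (fst x)) else \<phi> (fst x)) = let_mat (\<lambda>g. eval f (\<phi> g)) x"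
    using Cons.prems by (simp add: let_mat_def eval_winv)
  then show ?case using Cons
    by (simp add: wsubst_Cons eval_append eval_Cons_sl[OF sl_evalf[OF Cons.prems]] del: eval.simps(2))
qed

lemma let_mat_inv: "sl f \<Longrightarrow> fst y = fst x \<Longrightarrow> snd y \<noteq> snd x \<Longrightarrow> let_mat f x ** let_mat f y = mat 1"
  by (cases "snd x") (auto simp: let_mat_def sl_def adj_left1 adj_right1)

lemma eval_red: "sl f \<Longrightarrow> eval f (red w) = eval f w"
proof (induction w)
  case Nil
  then show ?case by simp
next
  case (Cons x xs)
  show ?case
  proof (cases "red xs")
    case Nil
    then show ?thesis using Cons by (simp add: eval_Cons_sl del: eval.simps(2))
  next
    case (Cons y ys)
    note IH = Cons.IH[OF Cons.prems]
    show ?thesis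
    proof (cases "fst y = fst x \<and> snd y \<noteq> snd x")
      case True
      have "eval f (x # xs) = let_mat f x ** (let_mat f y ** eval f ys)"
        using IH Cons(1) Cons.prems by (simp add: eval_Cons_sl del: eval.simps(2))
      also have "\<dots> = eval f ys"
        using let_mat_inv[OF Cons.prems] True by (simp add: matrix_mul_assoc)
      finally show ?thesis using True Cons(1) by simp
    next
      case False
      have "red (x # xs) = x # y # ys" using False Cons(1) by auto
      then show ?thesis using Cons(1) IH Cons.prems by (simp add: eval_Cons_sl del: eval.simps(2))
    qed
  qed
qed

lemma eval_cong: "(\<And>g. g \<in> letters w \<Longrightarrow> f g = f' g) \<Longrightarrow> eval f w = eval f' w"
  by (induction w) (auto simp: letters_def)

lemma sl_flip: "sl f \<Longrightarrow> sl (\<lambda>g. if h g then - f g else f g)"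
  by (simp add: sl_def)

lemma wpar_Cons: "wpar h (x # xs) = (h (fst x) \<noteq> wpar h xs)"
  by (simp add: wpar_def)
lemma wpar_Nil[simp]: "wpar h [] = False"
  by (simp add: wpar_def)

lemma eval_flip: "sl f \<Longrightarrow> eval (\<lambda>g. if h g then - f g else f g) w = (if wpar h w then - eval f w else eval f w)"
proof (induction w)
  case Nil
  then show ?case by simp
next
  case (Cons x xs)
  have l: "let_mat (\<lambda>g. if h g then - f g else f g) x = (if h (fst x) then - let_mat f x else let_mat f x)"
    by (simp add: let_mat_def)
  show ?case using Cons
    by (simp add: eval_Cons_sl sl_flip l wpar_Cons del: eval.simps(2))
qed

lemma sl_conj: "sl f \<Longrightarrow> det P = 1 \<Longrightarrow> sl (\<lambda>g. adj2 P ** f g ** P)"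
  by (simp add: sl_def det_mult2)

lemma eval_conj: "sl f \<Longrightarrow> det P = 1 \<Longrightarrow> eval (\<lambda>g. adj2 P ** f g ** P) w = adj2 P ** eval f w ** P"
proof (induction w)
  case Nil
  then show ?case by (simp add: adj_left1)
next
  case (Cons x xs)
  have l: "let_mat (\<lambda>g. adj2 P ** f g ** P) x = adj2 P ** let_mat f x ** P"
    by (simp add: let_mat_def adj2_mult matrix_mul_assoc)
  have "adj2 P ** let_mat f x ** P ** (adj2 P ** eval f xs ** P) = adj2 P ** (let_mat f x ** eval f xs) ** P"
  proof -
    have "adj2 P ** let_mat f x ** P ** (adj2 P ** eval f xs ** P) = adj2 P ** let_mat f x ** (P ** adj2 P) ** eval f xs ** P"
      by (simp add: matrix_mul_assoc)
    also have "\<dots> = adj2 P ** (let_mat f x ** eval f xs) ** P"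
      using Cons.prems by (simp add: adj_right1 matrix_mul_assoc)
    finally show ?thesis .
  qed
  then show ?case using Cons
    by (simp add: eval_Cons_sl sl_conj l del: eval.simps(2))
qed

definition scomm :: "mat2 \<Rightarrow> mat2 \<Rightarrow> bool" where
  "scomm K X \<longleftrightarrow> K ** X = X ** K \<or> K ** X = - (X ** K)"

lemma scomm_one: "scomm K (mat 1)" by (simp add: scomm_def)

lemma scomm_mult: "scomm K X \<Longrightarrow> scomm K Y \<Longrightarrow> scomm K (X ** Y)"
proof -
  assume a: "scomm K X" "scomm K Y"
  have e: "K ** (X ** Y) = (K ** X) ** Y" "X ** (K ** Y) = (X ** K) ** Y" "X ** (Y ** K) = (X ** Y) ** K"
    by (simp_all add: matrix_mul_assoc)
  show ?thesis using a unfolding scomm_def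
    by (elim disjE) (simp_all add: e, simp_all add: e[symmetric])
qed

lemma scomm_adj: "det X = 1 \<Longrightarrow> scomm K X \<Longrightarrow> scomm K (adj2 X)"
proof -
  assume d: "det X = 1" and s: "scomm K X"
  have e: "adj2 X ** K = adj2 X ** (K ** X) ** adj2 X"
    using d by (simp add: matrix_mul_assoc[symmetric] adj_right1)
  from s show ?thesis unfolding scomm_def
  proof
    assume "K ** X = X ** K"
    then have "adj2 X ** K = K ** adj2 X" using e d by (simp add: matrix_mul_assoc adj_left1)
    then show "K ** adj2 X = adj2 X ** K \<or> K ** adj2 X = - (adj2 X ** K)" by simp
  next
    assume "K ** X = - (X ** K)"
    then have "adj2 X ** K = - (K ** adj2 X)" using e d by (simp add: matrix_mul_assoc adj_left1)
    then show "K ** adj2 X = adj2 X ** K \<or> K ** adj2 X = - (adj2 X ** K)" by simp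
  qed
qed

lemma scomm_eval: "sl f \<Longrightarrow> (\<And>g. g \<in> letters w \<Longrightarrow> scomm K (f g)) \<Longrightarrow> scomm K (eval f w)"
proof (induction w)
  case Nil
  then show ?case by (simp add: scomm_one)
next
  case (Cons x xs)
  have "scomm K (let_mat f x)"
    using Cons.prems by (auto simp: let_mat_def letters_def sl_def intro: scomm_adj)
  moreover have "scomm K (eval f xs)" using Cons by (auto simp: letters_def)
  ultimately show ?case using Cons.prems by (simp add: eval_Cons_sl scomm_mult del: eval.simps(2))
qed

lemma conj_eq_iff: "det K = 1 \<Longrightarrow> (K ** X = Z ** K) \<longleftrightarrow> (X = adj2 K ** Z ** K)"
proof
  assume d: "det K = 1" and "K ** X = Z ** K"
  then have "adj2 K ** (K ** X) = adj2 K ** (Z ** K)" by simp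
  then show "X = adj2 K ** Z ** K" using d by (metis adj_cancel_left matrix_mul_assoc)
next
  assume d: "det K = 1" and "X = adj2 K ** Z ** K"
  then show "K ** X = Z ** K" by (simp add: adj_cancel_right matrix_mul_assoc[symmetric])
qed

lemma scomm_conj_iff: "det K = 1 \<Longrightarrow> scomm K X \<longleftrightarrow> (adj2 K ** X ** K = X \<or> adj2 K ** X ** K = - X)"
proof -
  assume d: "det K = 1"
  have "K ** X = - (X ** K) \<longleftrightarrow> K ** X = (- X) ** K" by simp
  moreover have "adj2 K ** (- X) ** K = - (adj2 K ** X ** K)" by simp
  moreover have "(X = - Y) \<longleftrightarrow> (Y = - X)" for Y :: mat2 by auto
  ultimately show ?thesis unfolding scomm_def using conj_eq_iff[OF d, of X X] conj_eq_iff[OF d, of X "- X"]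
    by metis
qed

definition cols :: "complex^2 \<Rightarrow> complex^2 \<Rightarrow> mat2" where
  "cols v w = (\<chi> i j. if j = 1 then v$i else w$i)"

lemma cols_entries: "(cols v w)$1$1 = v$1" "(cols v w)$2$1 = v$2" "(cols v w)$1$2 = w$1" "(cols v w)$2$2 = w$2"
  by (simp_all add: cols_def)

definition mk :: "complex \<Rightarrow> complex \<Rightarrow> complex \<Rightarrow> complex \<Rightarrow> mat2" where
  "mk a b c d = (\<chi> i j. if i = 1 \<and> j = 1 then a else if i = 1 \<and> j = 2 then b else if i = 2 \<and> j = 1 then c else d)"

lemma mk_entries: "(mk a b c d)$1$1 = a" "(mk a b c d)$1$2 = b" "(mk a b c d)$2$1 = c" "(mk a b c d)$2$2 = d"
  by (simp_all add: mk_def)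

lemmas EE = E cols_entries mk_entries

lemma eig_poly:
  fixes X :: mat2
  assumes "det X = 1" "X *v v = l *s v" "v \<noteq> 0"
  shows "l^2 - trace X * l + 1 = 0"
proof -
  have h: "X$1$1 * v$1 + X$1$2 * v$2 = l * v$1" "X$2$1 * v$1 + X$2$2 * v$2 = l * v$2"
    "X$1$1 * X$2$2 - X$1$2 * X$2$1 = 1"
    using assms(1,2) by (simp_all add: EE)
  have "(l^2 - trace X * l + 1) * v$1 = 0" "(l^2 - trace X * l + 1) * v$2 = 0"
    using h by (simp_all add: trace2) algebra+
  moreover have "v$1 \<noteq> 0 \<or> v$2 \<noteq> 0" using assms(3) by (auto simp: vec2_eq_iff)
  ultimately show ?thesis by auto
qed

lemma eig_exists:
  fixes X :: mat2
  assumes "l^2 - trace X * l + det X = 0"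
  shows "\<exists>v. v \<noteq> 0 \<and> X *v v = l *s v"
proof -
  have h: "l^2 - (X$1$1 + X$2$2) * l + (X$1$1 * X$2$2 - X$1$2 * X$2$1) = 0"
    using assms by (simp add: trace2 det_2)
  show ?thesis
  proof (cases "X$1$2 \<noteq> 0 \<or> l - X$1$1 \<noteq> 0")
    case True
    let ?v = "vector [X$1$2, l - X$1$1] :: complex^2"
    have "?v \<noteq> 0" using True by (auto simp: vec2_eq_iff)
    moreover have "X *v ?v = l *s ?v" using h by (simp add: EE power2_eq_square) algebra
    ultimately show ?thesis by blast
  next
    case F: False
    show ?thesis
    proof (cases "X$2$1 \<noteq> 0 \<or> l - X$2$2 \<noteq> 0")
      case True
      let ?v = "vector [l - X$2$2, X$2$1] :: complex^2"
      have "?v \<noteq> 0" using True by (auto simp: vec2_eq_iff)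
      moreover have "X *v ?v = l *s ?v" using h F by (simp add: EE power2_eq_square algebra_simps)
      ultimately show ?thesis by blast
    next
      case False
      let ?v = "vector [1, 0] :: complex^2"
      have "?v \<noteq> 0" by (auto simp: vec2_eq_iff)
      moreover have "X *v ?v = l *s ?v" using F False by (simp add: EE)
      ultimately show ?thesis by blast
    qed
  qed
qed

lemma polar_CH: "(A::mat2) ** B + B ** A = mat (trace A) ** B + mat (trace B) ** A + mat (trace (A ** B) - trace A * trace B)"
  by (simp add: EE algebra_simps)

lemma dep_of_det0:
  assumes "v \<noteq> 0" "det (cols v w) = 0"
  shows "\<exists>m. w = m *s v"
proof (cases "v$1 = 0")
  case True
  then have "v$2 \<noteq> 0" using assms(1) by (auto simp: vec2_eq_iff)
  then show ?thesis using assms True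
    by (intro exI[of _ "w$2 / v$2"]) (auto simp: EE field_simps)
next
  case False
  then show ?thesis using assms
    by (intro exI[of _ "w$1 / v$1"]) (auto simp: EE field_simps)
qed

lemma nf_A:
  fixes A B :: mat2
  assumes dA: "det A = 1" and Av: "A *v v = l *s v" and l0: "l^2 - trace A * l + 1 = 0"
  shows "A *v (B *v v) = (trace (A ** B) - trace B / l) *s v + (1 / l) *s (B *v v)"
proof -
  have "l \<noteq> 0" using l0 by auto
  have tA: "trace A = l + 1 / l" using l0 \<open>l \<noteq> 0\<close> by (simp add: field_simps power2_eq_square)
  have "(A ** B + B ** A) *v v = (mat (trace A) ** B + mat (trace B) ** A + mat (trace (A ** B) - trace A * trace B)) *v v"
    by (simp add: polar_CH)
  then have "A *v (B *v v) + B *v (l *s v) = trace A *s (B *v v) + trace B *s (l *s v) + (trace (A ** B) - trace A * trace B) *s v"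
    using Av by (simp add: matrix_vector_mult_add_rdistrib matrix_vector_mul_assoc[symmetric] EE)
  then show ?thesis using \<open>l \<noteq> 0\<close> unfolding tA
    by (simp add: EE field_simps)
qed


lemma mv_smult: "(X::mat2) *v (c *s v) = c *s (X *v v)" by (simp add: EE algebra_simps)
lemma mv_diff: "(X::mat2) *v (v - w) = X *v v - X *v w" by (simp add: EE algebra_simps)
lemma mv_add: "(X::mat2) *v (v + w) = X *v v + X *v w" by (simp add: EE algebra_simps)
lemma CH2v: "det (B::mat2) = 1 \<Longrightarrow> B *v (B *v v) = trace B *s (B *v v) - v"
proof -
  assume d: "det B = 1"
  have "B *v (B *v v) = (B ** B) *v v" by (simp add: matrix_vector_mul_assoc)
  also have "\<dots> = (mat (trace B) ** B - mat 1) *v v" using CH2[OF d] by simp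
  also have "\<dots> = trace B *s (B *v v) - v" by (simp add: EE algebra_simps)
  finally show ?thesis .
qed

lemma cols_mult_left: "(A::mat2) ** cols v w = cols (A *v v) (A *v w)"
  by (simp add: EE)
lemma cols_mult_mk: "cols v w ** mk a b c d = cols (a *s v + c *s w) (b *s v + d *s w)"
  by (simp add: EE algebra_simps)
lemma cols_eq: "cols v w = cols v' w' \<longleftrightarrow> v = v' \<and> w = w'"
  by (auto simp: EE)

lemma nf:
  fixes A B :: mat2
  assumes dA: "det A = 1" and dB: "det B = 1" and Av: "A *v v = l *s v" and l0: "l^2 - trace A * l + 1 = 0"
  shows "A ** cols v (B *v v) = cols v (B *v v) ** mk l (trace (A ** B) - trace B / l) 0 (1 / l)"
    "B ** cols v (B *v v) = cols v (B *v v) ** mk 0 (-1) 1 (trace B)"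
proof -
  have "l \<noteq> 0" using l0 by auto
  show "A ** cols v (B *v v) = cols v (B *v v) ** mk l (trace (A ** B) - trace B / l) 0 (1 / l)"
    unfolding cols_mult_left cols_mult_mk cols_eq using nf_A[OF dA Av l0] Av by simp
  have "B *v (B *v v) = trace B *s (B *v v) - v" by (rule CH2v[OF dB])
  then show "B ** cols v (B *v v) = cols v (B *v v) ** mk 0 (-1) 1 (trace B)"
    unfolding cols_mult_left cols_mult_mk cols_eq by (simp add: algebra_simps)
qed

lemma matc_comm: "mat c ** (X::mat2) = X ** mat c" by (simp add: EE algebra_simps)
lemma matc_cancel: "c \<noteq> 0 \<Longrightarrow> mat c ** (X::mat2) = mat c ** Y \<Longrightarrow> X = Y" by (simp add: EE)
lemma det_matc: "det (mat c :: mat2) = c^2" by (simp add: EE power2_eq_square)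

lemma intertwine:
  fixes Q A N :: mat2
  assumes d: "det Q \<noteq> 0" and h: "A ** Q = Q ** N"
  shows "adj2 Q ** A = N ** adj2 Q"
proof -
  have "mat (det Q) ** (adj2 Q ** A) = adj2 Q ** A ** mat (det Q)" by (rule matc_comm)
  also have "\<dots> = adj2 Q ** A ** (Q ** adj2 Q)" by (simp add: adj2_right)
  also have "\<dots> = adj2 Q ** (A ** Q) ** adj2 Q" by (simp add: matrix_mul_assoc)
  also have "\<dots> = (adj2 Q ** Q) ** N ** adj2 Q" using h by (simp add: matrix_mul_assoc)
  also have "\<dots> = mat (det Q) ** (N ** adj2 Q)" by (simp add: adj2_left matrix_mul_assoc)
  finally have "mat (det Q) ** (adj2 Q ** A) = mat (det Q) ** (N ** adj2 Q)" .
  then show ?thesis using matc_cancel d by blast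
qed

lemma conj_from_intertwine:
  fixes A A' P0 :: mat2
  assumes "det P0 \<noteq> 0"
  shows "\<exists>P. det P = 1 \<and> (\<forall>X Y. X ** P0 = P0 ** Y \<longrightarrow> adj2 P ** X ** P = Y)"
proof -
  define c where "c = 1 / csqrt (det P0)"
  have cs: "csqrt (det P0) \<noteq> 0" using assms by simp
  have c2: "c^2 * det P0 = 1" using cs unfolding c_def by (simp add: power_divide field_simps)
  define P where "P = mat c ** P0"
  have dP: "det P = 1" unfolding P_def by (simp add: det_mult2 det_matc c2)
  have "adj2 P ** X ** P = Y" if "X ** P0 = P0 ** Y" for X Y
  proof -
    have "X ** P = P ** Y" unfolding P_def using that
      by (metis matc_comm matrix_mul_assoc)
    then show ?thesis using conj_eq_iff[OF dP, of Y X] by simp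
  qed
  then show ?thesis using dP by blast
qed

lemma aux_vecB:
  fixes v w :: "complex^2"
  assumes "m \<noteq> 0" "m^2 - y * m + 1 = 0"
  shows "w - (1/m) *s (y *s w - v) = (1/m) *s (v - (1/m) *s w)"
proof -
  have c: "1 - y/m = - (1/m) * (1/m)" using assms by (simp add: field_simps power2_eq_square) algebra
  have "w$i - (1/m) * (y * w$i - v$i) = (1/m) * (v$i - (1/m) * w$i)" for i
  proof -
    have "w$i - (1/m) * (y * w$i - v$i) = (1 - y/m) * w$i + (1/m) * v$i" by (simp add: algebra_simps)
    also have "\<dots> = (1/m) * (v$i - (1/m) * w$i)" unfolding c by (simp add: algebra_simps)
    finally show ?thesis .
  qed
  then show ?thesis by (simp add: vec_eq_iff vector_scalar_mult_def)
qed

lemma aux_vecA: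
  fixes v w :: "complex^2"
  assumes "m \<noteq> 0" "l \<noteq> 0" "m^2 - y * m + 1 = 0" "(l*m)^2 - z * (l*m) + 1 = 0"
  shows "l *s v - (1/m) *s ((z - y / l) *s v + (1 / l) *s w) = (1/l) *s (v - (1/m) *s w)"
proof -
  have "l*l*m*m - z*l*m + y*m - m*m = 0" using assms(3,4) by algebra
  then have c: "l - (z - y/l)/m = 1/l" using assms(1,2) by (simp add: field_simps) algebra
  have "l * v$i - (1/m) * ((z - y / l) * v$i + (1 / l) * w$i) = (1/l) * (v$i - (1/m) * w$i)" for i
  proof -
    have "l * v$i - (1/m) * ((z - y / l) * v$i + (1 / l) * w$i) = (l - (z - y/l)/m) * v$i - (1/l) * (1/m) * w$i"
      using assms(1,2) by (simp add: field_simps)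
    also have "\<dots> = (1/l) * (v$i - (1/m) * w$i)" unfolding c by (simp add: algebra_simps)
    finally show ?thesis .
  qed
  then show ?thesis by (simp add: vec_eq_iff vector_scalar_mult_def)
qed

lemma common_eig_irr:
  "irreducible2 A B \<Longrightarrow> v \<noteq> 0 \<Longrightarrow> A *v v = l *s v \<Longrightarrow> B *v v = m *s v \<Longrightarrow> False"
  unfolding irreducible2_def by blast

lemma conj_by_traces:
  fixes A B A' B' :: mat2
  assumes irr: "irreducible2 A B" and dA: "det A = 1" and dB: "det B = 1"
    and dA': "det A' = 1" and dB': "det B' = 1"
    and tA: "trace A' = trace A" and tB: "trace B' = trace B" and tAB: "trace (A' ** B') = trace (A ** B)"
  shows "\<exists>P. det P = 1 \<and> adj2 P ** A' ** P = A \<and> adj2 P ** B' ** P = B"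
proof -
  define x where "x = trace A"
  define y where "y = trace B"
  define z where "z = trace (A ** B)"
  define l where "l = (x + csqrt (x^2 - 4)) / 2"
  have l0: "l^2 - x * l + 1 = 0" unfolding l_def
    by (simp add: power2_eq_square field_simps) (simp add: power2_eq_square[symmetric] algebra_simps)
  have ln: "l \<noteq> 0" using l0 by auto
  obtain v where v: "v \<noteq> 0" "A *v v = l *s v" using eig_exists[of l A] l0 dA x_def by auto
  obtain v' where v': "v' \<noteq> 0" "A' *v v' = l *s v'" using eig_exists[of l A'] l0 dA' tA x_def by auto
  define Q where "Q = cols v (B *v v)"
  define Q' where "Q' = cols v' (B' *v v')"
  have nQ: "A ** Q = Q ** mk l (z - y / l) 0 (1 / l)" "B ** Q = Q ** mk 0 (-1) 1 y"
    using nf[OF dA dB v(2)] l0 unfolding Q_def x_def y_def z_def by auto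
  have nQ': "A' ** Q' = Q' ** mk l (z - y / l) 0 (1 / l)" "B' ** Q' = Q' ** mk 0 (-1) 1 y"
    using nf[OF dA' dB' v'(2)] l0 unfolding Q'_def x_def y_def z_def tA tB tAB by auto
  have dQ: "det Q \<noteq> 0"
  proof
    assume "det Q = 0"
    then obtain m where "B *v v = m *s v" using dep_of_det0[OF v(1)] unfolding Q_def by blast
    then show False using common_eig_irr[OF irr v] by blast
  qed
  have dQ': "det Q' \<noteq> 0"
  proof
    assume "det Q' = 0"
    then obtain m where m: "B' *v v' = m *s v'" using dep_of_det0[OF v'(1)] unfolding Q'_def by blast
    have my: "m^2 - y * m + 1 = 0" using eig_poly[OF dB' m v'(1)] tB y_def by simp
    have "(A' ** B') *v v' = (l * m) *s v'" using m v'(2)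
      by (simp add: matrix_vector_mul_assoc[symmetric] mv_smult)
    moreover have "det (A' ** B') = 1" using dA' dB' by (simp add: det_mult2)
    ultimately have "(l*m)^2 - trace (A' ** B') * (l*m) + 1 = 0" using eig_poly[OF _ _ v'(1)] by blast
    then have lmz: "(l*m)^2 - z * (l*m) + 1 = 0" using tAB z_def by simp
    have mn: "m \<noteq> 0" using my by auto
    define u where "u = v - (1/m) *s (B *v v)"
    have "u \<noteq> 0"
    proof
      assume "u = 0"
      then have "v = (1/m) *s (B *v v)" unfolding u_def by simp
      then have "m *s v = B *v v" using mn by (simp add: vec2_eq_iff vector_scalar_mult_def)
      then have "det Q = 0" unfolding Q_def by (simp add: EE) (metis mult.commute mult.left_commute)
      then show False using dQ by simp
    qed
    have Bw: "B *v (B *v v) = y *s (B *v v) - v" using CH2v[OF dB] unfolding y_def .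
    have Aw: "A *v (B *v v) = (z - y / l) *s v + (1 / l) *s (B *v v)"
      using nf_A[OF dA v(2)] l0 unfolding x_def y_def z_def by simp
    have "B *v u = (1/m) *s u"
    proof -
      have "B *v u = B *v v - (1/m) *s (B *v (B *v v))" unfolding u_def
        by (simp add: mv_diff mv_smult)
      then show ?thesis unfolding Bw u_def using aux_vecB[OF mn my] by simp
    qed
    moreover have "A *v u = (1/l) *s u"
    proof -
      have "A *v u = A *v v - (1/m) *s (A *v (B *v v))" unfolding u_def
        by (simp add: mv_diff mv_smult)
      then show ?thesis unfolding Aw u_def using aux_vecA[OF mn ln my lmz] v(2) by simp
    qed
    ultimately show False using common_eig_irr[OF irr \<open>u \<noteq> 0\<close>] by blast
  qed
  define P0 where "P0 = Q' ** adj2 Q"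
  have dP0: "det P0 \<noteq> 0" unfolding P0_def using dQ dQ' by (simp add: det_mult2)
  have iA: "A' ** P0 = P0 ** A"
  proof -
    have "P0 ** A = Q' ** (adj2 Q ** A)" unfolding P0_def by (simp add: matrix_mul_assoc)
    also have "\<dots> = Q' ** (mk l (z - y / l) 0 (1 / l) ** adj2 Q)" using intertwine[OF dQ nQ(1)] by simp
    also have "\<dots> = A' ** P0" unfolding P0_def using nQ'(1) by (simp add: matrix_mul_assoc)
    finally show ?thesis by simp
  qed
  have iB: "B' ** P0 = P0 ** B"
  proof -
    have "P0 ** B = Q' ** (adj2 Q ** B)" unfolding P0_def by (simp add: matrix_mul_assoc)
    also have "\<dots> = Q' ** (mk 0 (-1) 1 y ** adj2 Q)" using intertwine[OF dQ nQ(2)] by simp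
    also have "\<dots> = B' ** P0" unfolding P0_def using nQ'(2) by (simp add: matrix_mul_assoc)
    finally show ?thesis by simp
  qed
  obtain P where "det P = 1" "\<forall>X Y. X ** P0 = P0 ** Y \<longrightarrow> adj2 P ** X ** P = Y"
    using conj_from_intertwine[OF dP0] by blast
  then show ?thesis using iA iB by blast
qed

definition asg :: "mat2 \<Rightarrow> mat2 \<Rightarrow> mat2 \<Rightarrow> gen \<Rightarrow> mat2" where
  "asg A B T = (\<lambda>g. case g of Ga \<Rightarrow> A | Gb \<Rightarrow> B | Gt \<Rightarrow> T)"

definition flip :: "(gen \<Rightarrow> bool) \<Rightarrow> (gen \<Rightarrow> mat2) \<Rightarrow> gen \<Rightarrow> mat2" where
  "flip h f = (\<lambda>g. if h g then - f g else f g)"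

definition conjf :: "mat2 \<Rightarrow> (gen \<Rightarrow> mat2) \<Rightarrow> gen \<Rightarrow> mat2" where
  "conjf P f = (\<lambda>g. adj2 P ** f g ** P)"

definition epsv :: "(gen \<Rightarrow> word) \<Rightarrow> (gen \<Rightarrow> mat2) \<Rightarrow> gen \<Rightarrow> bool" where
  "epsv \<phi> f g \<longleftrightarrow> adj2 (f Gt) ** f g ** f Gt \<noteq> eval f (\<phi> g)"

lemma asg_simps[simp]: "asg A B T Ga = A" "asg A B T Gb = B" "asg A B T Gt = T"
  by (simp_all add: asg_def)

lemma sl_asg: "det A = 1 \<Longrightarrow> det B = 1 \<Longrightarrow> det T = 1 \<Longrightarrow> sl (asg A B T)"
  unfolding sl_def by (metis asg_simps gen.exhaust)

lemma sl_surf: "det A = 1 \<Longrightarrow> det B = 1 \<Longrightarrow> sl (surf_assign A B)"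
  unfolding sl_def surf_assign_def by (auto split: gen.split simp: det_I)

lemma psl_rep_iff: "psl_rep_M \<phi> f \<longleftrightarrow> sl f \<and> (\<forall>g\<in>{Ga, Gb}.
    adj2 (f Gt) ** f g ** f Gt = eval f (\<phi> g) \<or> adj2 (f Gt) ** f g ** f Gt = - eval f (\<phi> g))"
  unfolding psl_rep_M_def sl_def SL2_def by (auto simp: matrix_inv_SL2)

lemma sl_rep_iff: "sl_rep_M \<phi> f \<longleftrightarrow> sl f \<and> (\<forall>g\<in>{Ga, Gb}. adj2 (f Gt) ** f g ** f Gt = eval f (\<phi> g))"
  unfolding sl_rep_M_def sl_def SL2_def by (auto simp: matrix_inv_SL2)

lemma psl_eps: "psl_rep_M \<phi> f \<Longrightarrow> g \<in> {Ga, Gb} \<Longrightarrow>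
    adj2 (f Gt) ** f g ** f Gt = (if epsv \<phi> f g then - eval f (\<phi> g) else eval f (\<phi> g))"
  unfolding psl_rep_iff epsv_def by auto

lemma sl_rep_iff_eps: "sl_rep_M \<phi> f \<longleftrightarrow> psl_rep_M \<phi> f \<and> (\<forall>g\<in>{Ga, Gb}. \<not> epsv \<phi> f g)"
  unfolding sl_rep_iff psl_rep_iff epsv_def by auto

lemma eps_unique: "sl f \<Longrightarrow> adj2 (f Gt) ** f g ** f Gt = (if e then - eval f (\<phi> g) else eval f (\<phi> g)) \<Longrightarrow>
   epsv \<phi> f g = e"
proof -
  assume s: "sl f" and h: "adj2 (f Gt) ** f g ** f Gt = (if e then - eval f (\<phi> g) else eval f (\<phi> g))"
  have "det (eval f (\<phi> g)) = 1" using det_eval[OF s] .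
  then have "- eval f (\<phi> g) \<noteq> eval f (\<phi> g)" using neg_neq_self by simp
  then show ?thesis using h unfolding epsv_def by auto
qed

lemma flip_app: "flip h f g = (if h g then - f g else f g)" by (simp add: flip_def)
lemma conjf_app: "conjf P f g = adj2 P ** f g ** P" by (simp add: conjf_def)

lemma sl_flip': "sl f \<Longrightarrow> sl (flip h f)"
  unfolding flip_def by (rule sl_flip)

lemma eval_flip': "sl f \<Longrightarrow> eval (flip h f) w = (if wpar h w then - eval f w else eval f w)"
  unfolding flip_def by (rule eval_flip)

lemma eps_flip:
  assumes p: "psl_rep_M \<phi> f" and g: "g \<in> {Ga, Gb}"
  shows "psl_rep_M \<phi> (flip h f) \<and> epsv \<phi> (flip h f) g = (epsv \<phi> f g \<noteq> (h g \<noteq> wpar h (\<phi> g)))"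
proof -
  have s: "sl f" using p psl_rep_iff by blast
  have s': "sl (flip h f)" using sl_flip'[OF s] .
  have e: "adj2 (flip h f Gt) ** flip h f g' ** flip h f Gt =
     (if epsv \<phi> f g' \<noteq> (h g' \<noteq> wpar h (\<phi> g')) then - eval (flip h f) (\<phi> g') else eval (flip h f) (\<phi> g'))"
    if "g' \<in> {Ga, Gb}" for g'
    using psl_eps[OF p that] by (simp add: flip_app eval_flip'[OF s])
  have "psl_rep_M \<phi> (flip h f)" unfolding psl_rep_iff using s' e by auto
  moreover have "epsv \<phi> (flip h f) g = (epsv \<phi> f g \<noteq> (h g \<noteq> wpar h (\<phi> g)))"
    using eps_unique[where \<phi>=\<phi>, OF s' e[OF g]] .
  ultimately show ?thesis by blast
qed

lemma sl_conjf: "sl f \<Longrightarrow> det P = 1 \<Longrightarrow> sl (conjf P f)"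
  unfolding conjf_def by (rule sl_conj)

lemma eval_conjf: "sl f \<Longrightarrow> det P = 1 \<Longrightarrow> eval (conjf P f) w = adj2 P ** eval f w ** P"
  unfolding conjf_def by (rule eval_conj)

lemma conj3: "det P = 1 \<Longrightarrow> adj2 (adj2 P ** T ** P) ** (adj2 P ** X ** P) ** (adj2 P ** T ** P) = adj2 P ** (adj2 T ** X ** T) ** P"
proof -
  assume d: "det P = 1"
  have "adj2 (adj2 P ** T ** P) = adj2 P ** adj2 T ** P" by (simp add: adj2_mult matrix_mul_assoc)
  moreover have "adj2 P ** adj2 T ** P ** (adj2 P ** X ** P) ** (adj2 P ** T ** P)
      = adj2 P ** adj2 T ** (P ** adj2 P) ** X ** (P ** adj2 P) ** T ** P"
    by (simp add: matrix_mul_assoc)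
  ultimately show ?thesis using d by (simp add: adj2_right matrix_mul_assoc)
qed

lemma eps_conj:
  assumes p: "psl_rep_M \<phi> f" and g: "g \<in> {Ga, Gb}" and d: "det P = 1"
  shows "psl_rep_M \<phi> (conjf P f) \<and> epsv \<phi> (conjf P f) g = epsv \<phi> f g"
proof -
  have s: "sl f" using p psl_rep_iff by blast
  have s': "sl (conjf P f)" using sl_conjf[OF s d] .
  have e: "adj2 (conjf P f Gt) ** conjf P f g' ** conjf P f Gt =
     (if epsv \<phi> f g' then - eval (conjf P f) (\<phi> g') else eval (conjf P f) (\<phi> g'))"
    if "g' \<in> {Ga, Gb}" for g'
    using psl_eps[OF p that] by (simp add: conjf_app conj3[OF d] eval_conjf[OF s d])
  have "psl_rep_M \<phi> (conjf P f)" unfolding psl_rep_iff using s' e by auto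
  moreover have "epsv \<phi> (conjf P f) g = epsv \<phi> f g"
    using eps_unique[where \<phi>=\<phi>, OF s' e[OF g]] .
  ultimately show ?thesis by blast
qed

lemma pchar_flip: "sl f \<Longrightarrow> pchar_M (flip h f) = pchar_M f"
  unfolding pchar_M_def by (rule ext) (simp add: eval_flip')

lemma pchar_conj: "sl f \<Longrightarrow> det P = 1 \<Longrightarrow> pchar_M (conjf P f) = pchar_M f"
  unfolding pchar_M_def by (rule ext) (simp add: eval_conjf trace_conj)

lemma letters_surface: "surface_word w \<Longrightarrow> g \<in> letters w \<Longrightarrow> g = Ga \<or> g = Gb"
  unfolding surface_word_def by auto

lemma eval_asg_surf: "surface_word w \<Longrightarrow> eval (asg A B T) w = eval (surf_assign A B) w"
  by (rule eval_cong) (auto dest: letters_surface simp: surf_assign_def)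

lemma restr_iff: "restrS (pchar_M f) = pchar_S A B \<longleftrightarrow>
   (\<forall>w. surface_word w \<longrightarrow> (trace (eval f w))^2 = (trace (eval (surf_assign A B) w))^2)"
  unfolding restrS_def pchar_S_def pchar_M_def by (auto simp: fun_eq_iff)

lemma restr_asg: "restrS (pchar_M (asg A B T)) = pchar_S A B"
  unfolding restr_iff by (simp add: eval_asg_surf)

lemma sq_eq: "(x::complex)^2 = y^2 \<Longrightarrow> x = y \<or> x = - y"
  by (simp add: power2_eq_iff)

lemma sign_choice: "(trace (A1::mat2))^2 = x^2 \<Longrightarrow> \<exists>s. trace (if s then - A1 else A1) = x"
proof -
  assume "(trace A1)^2 = x^2"
  then have "trace A1 = x \<or> trace A1 = - x" by (rule sq_eq)
  then show ?thesis
  proof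
    assume "trace A1 = x" then show ?thesis by (intro exI[of _ False]) simp
  next
    assume "trace A1 = - x" then show ?thesis by (intro exI[of _ True]) simp
  qed
qed

lemma sign_adjust:
  fixes A B A1 B1 :: mat2
  assumes dA: "det A = 1" and dB: "det B = 1" and dA1: "det A1 = 1" and dB1: "det B1 = 1"
    and ha: "(trace A1)^2 = (trace A)^2" and hb: "(trace B1)^2 = (trace B)^2"
    and hab: "(trace (A1 ** B1))^2 = (trace (A ** B))^2"
    and haab: "(trace (A1 ** A1 ** B1))^2 = (trace (A ** A ** B))^2"
  shows "\<exists>sa sb. trace (if sa then - A1 else A1) = trace A \<and> trace (if sb then - B1 else B1) = trace B
     \<and> trace ((if sa then - A1 else A1) ** (if sb then - B1 else B1)) = trace (A ** B)"
proof -
  define x where "x = trace A"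
  define y where "y = trace B"
  define z where "z = trace (A ** B)"
  obtain sa where sa: "trace (if sa then - A1 else A1) = x"
    using sign_choice[of A1 x] ha unfolding x_def by blast
  obtain sb where sb: "trace (if sb then - B1 else B1) = y"
    using sign_choice[of B1 y] hb unfolding y_def by blast
  define A2 where "A2 = (if sa then - A1 else A1)"
  define B2 where "B2 = (if sb then - B1 else B1)"
  have dA2: "det A2 = 1" unfolding A2_def using dA1 by simp
  have e1: "A2 ** B2 = A1 ** B1 \<or> A2 ** B2 = - (A1 ** B1)" unfolding A2_def B2_def by auto
  have t2: "(trace (A2 ** B2))^2 = z^2" unfolding z_def using hab e1 by auto
  have e2: "A2 ** A2 ** B2 = A1 ** A1 ** B1 \<or> A2 ** A2 ** B2 = - (A1 ** A1 ** B1)"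
    unfolding A2_def B2_def by auto
  have t3: "(trace (A2 ** A2 ** B2))^2 = (x * z - y)^2"
    using haab e2 trace_XXY[OF dA, of B] unfolding x_def y_def z_def by auto
  have t3': "trace (A2 ** A2 ** B2) = x * trace (A2 ** B2) - y"
    using trace_XXY[OF dA2, of B2] sa sb unfolding A2_def B2_def by simp
  show ?thesis
  proof (cases "trace (A2 ** B2) = z")
    case True
    then show ?thesis using sa sb unfolding A2_def B2_def x_def y_def z_def by blast
  next
    case False
    then have zz: "trace (A2 ** B2) = - z" using sq_eq[OF t2] by blast
    have "(x * z + y)^2 = (x * z - y)^2"
    proof -
      have "(x * z + y)^2 = (x * (- z) - y)^2" by (simp add: power2_eq_square algebra_simps)
      also have "\<dots> = (x * z - y)^2" using t3 t3' zz by simp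
      finally show ?thesis .
    qed
    moreover have "(x * z + y)^2 - (x * z - y)^2 = 4 * (x * y * z)"
      by (simp add: power2_eq_square algebra_simps)
    ultimately have "x * y * z = 0" by simp
    moreover have "z \<noteq> 0" using False zz by auto
    ultimately have "x = 0 \<or> y = 0" by simp
    then show ?thesis
    proof
      assume x0: "x = 0"
      have "trace (if \<not> sa then - A1 else A1) = x" using sa x0 by (cases sa) auto
      moreover have "trace ((if \<not> sa then - A1 else A1) ** B2) = z" using zz unfolding A2_def
        by (cases sa) auto
      ultimately show ?thesis using sb unfolding B2_def x_def y_def z_def by blast
    next
      assume y0: "y = 0"
      have "trace (if \<not> sb then - B1 else B1) = y" using sb y0 by (cases sb) auto
      moreover have "trace (A2 ** (if \<not> sb then - B1 else B1)) = z" using zz unfolding B2_def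
        by (cases sb) auto
      ultimately show ?thesis using sa unfolding A2_def x_def y_def z_def by blast
    qed
  qed
qed

lemma surf_words: "surface_word [(Ga,False)]" "surface_word [(Gb,False)]" "surface_word [(Ga,False),(Gb,False)]"
  "surface_word [(Ga,False),(Ga,False),(Gb,False)]"
  by (simp_all add: surface_word_def letters_def)

lemma norm_rep:
  assumes irr: "irreducible2 A B" and dA: "det A = 1" and dB: "det B = 1"
    and p: "psl_rep_M \<phi> f" and r: "restrS (pchar_M f) = pchar_S A B"
  shows "\<exists>T h. det T = 1 \<and> psl_rep_M \<phi> (asg A B T) \<and> pchar_M (asg A B T) = pchar_M f \<and>
     (\<forall>g\<in>{Ga,Gb}. epsv \<phi> (asg A B T) g = (epsv \<phi> f g \<noteq> (h g \<noteq> wpar h (\<phi> g))))"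
proof -
  have s: "sl f" using p psl_rep_iff by blast
  have dets: "det (f g) = 1" for g using s sl_def by blast
  have rr: "\<And>w. surface_word w \<Longrightarrow> (trace (eval f w))^2 = (trace (eval (surf_assign A B) w))^2"
    using r restr_iff by blast
  have sa_: "surf_assign A B Ga = A" "surf_assign A B Gb = B" by (simp_all add: surf_assign_def)
  have ha: "(trace (f Ga))^2 = (trace A)^2" using rr[OF surf_words(1)] by (simp add: sa_)
  have hb: "(trace (f Gb))^2 = (trace B)^2" using rr[OF surf_words(2)] by (simp add: sa_)
  have hab: "(trace (f Ga ** f Gb))^2 = (trace (A ** B))^2" using rr[OF surf_words(3)] by (simp add: sa_)
  have haab: "(trace (f Ga ** f Ga ** f Gb))^2 = (trace (A ** A ** B))^2"
    using rr[OF surf_words(4)] by (simp add: sa_ matrix_mul_assoc)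
  obtain sa sb where sab: "trace (if sa then - f Ga else f Ga) = trace A" "trace (if sb then - f Gb else f Gb) = trace B"
     "trace ((if sa then - f Ga else f Ga) ** (if sb then - f Gb else f Gb)) = trace (A ** B)"
    using sign_adjust[OF dA dB dets dets ha hb hab haab] by blast
  define h where "h = (\<lambda>g. (g = Ga \<and> sa) \<or> (g = Gb \<and> sb))"
  define f2 where "f2 = flip h f"
  have f2a: "f2 Ga = (if sa then - f Ga else f Ga)" "f2 Gb = (if sb then - f Gb else f Gb)" "f2 Gt = f Gt"
    unfolding f2_def h_def by (simp_all add: flip_app)
  have s2: "sl f2" unfolding f2_def using sl_flip'[OF s] .
  have d2: "det (f2 g) = 1" for g using s2 sl_def by blast
  have t1: "trace (f2 Ga) = trace A" "trace (f2 Gb) = trace B" "trace (f2 Ga ** f2 Gb) = trace (A ** B)"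
    using sab unfolding f2a by simp_all
  obtain P where P: "det P = 1" "adj2 P ** f2 Ga ** P = A" "adj2 P ** f2 Gb ** P = B"
    using conj_by_traces[OF irr dA dB d2 d2 t1] by blast
  define T where "T = adj2 P ** f Gt ** P"
  have cf: "conjf P f2 = asg A B T"
  proof
    fix g show "conjf P f2 g = asg A B T g"
      by (cases g) (simp_all add: conjf_app P T_def f2a(3))
  qed
  have dT: "det T = 1" unfolding T_def using P(1) dets by (simp add: det_mult2)
  have p2: "psl_rep_M \<phi> f2" using eps_flip[OF p, of Ga h] unfolding f2_def by blast
  have psl: "psl_rep_M \<phi> (asg A B T)" using eps_conj[OF p2 _ P(1), of Ga] cf by simp
  have pc: "pchar_M (asg A B T) = pchar_M f"
    using pchar_conj[OF s2 P(1)] pchar_flip[OF s] cf unfolding f2_def by simp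
  have "epsv \<phi> (asg A B T) g = (epsv \<phi> f g \<noteq> (h g \<noteq> wpar h (\<phi> g)))" if g: "g \<in> {Ga,Gb}" for g
    using eps_conj[OF p2 g P(1)] eps_flip[OF p g, of h] cf unfolding f2_def by simp
  then show ?thesis using dT psl pc by blast
qed

definition J0 :: mat2 where "J0 = mk \<i> 0 0 (- \<i>)"

lemma J0_entries: "J0$1$1 = \<i>" "J0$1$2 = 0" "J0$2$1 = 0" "J0$2$2 = - \<i>"
  by (simp_all add: J0_def mk_entries)

lemma scomm_J0: "scomm J0 X \<longleftrightarrow> (X$1$2 = 0 \<and> X$2$1 = 0) \<or> (X$1$1 = 0 \<and> X$2$2 = 0)"
  unfolding scomm_def by (auto simp: E J0_entries)

lemma trace_diff_J0: "(trace U)^2 - (trace (U ** J0))^2 = 2 * ((U$1$1)^2 + (U$2$2)^2)"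
  by (simp add: E J0_entries power2_eq_square algebra_simps)

lemma trace_eq_J0: "(trace U)^2 = (trace (U ** J0))^2 \<Longrightarrow> (U$1$1)^2 + (U$2$2)^2 = 0"
proof -
  assume a: "(trace U)^2 = (trace (U ** J0))^2"
  have "2 * ((U$1$1)^2 + (U$2$2)^2) = 0" unfolding trace_diff_J0[symmetric] using a by simp
  then show ?thesis by (simp only: mult_eq_0_iff) simp
qed

lemma diag_offdiag_scomm:
  fixes A B :: mat2
  assumes "A$1$2 = 0" "A$2$1 = 0" "B$1$1 = 0" "B$2$2 = 0" "(A$1$1)^2 = (A$2$2)^2"
  shows "scomm B A"
proof -
  have "A$1$1 = A$2$2 \<or> A$1$1 = - A$2$2" using assms(5) sq_eq by blast
  then show ?thesis unfolding scomm_def using assms(1-4) by (auto simp: E algebra_simps)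
qed

lemma dist_coord:
  fixes A B T :: mat2
  assumes dA: "det A = 1" and dB: "det B = 1" and dT: "det T = 1"
    and sA: "scomm J0 A" and sB: "scomm J0 B"
    and h: "\<And>W. W \<in> {mat 1, A, B, A ** B, B ** A} \<Longrightarrow> (trace (T ** W))^2 = (trace (T ** W ** J0))^2"
  shows "\<exists>Y. det Y = 1 \<and> scomm Y A \<and> scomm Y B \<and> Y \<noteq> mat 1 \<and> Y \<noteq> - mat 1 \<and> Y \<noteq> J0 \<and> Y \<noteq> - J0"
proof -
  have h2: "((T ** W)$1$1)^2 + ((T ** W)$2$2)^2 = 0" if "W \<in> {mat 1, A, B, A ** B, B ** A}" for W
    using trace_eq_J0[OF h[OF that]] .
  have eI: "(T$1$1)^2 + (T$2$2)^2 = 0" using h2[of "mat 1"] by simp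
  have eA: "(T$1$1 * A$1$1 + T$1$2 * A$2$1)^2 + (T$2$1 * A$1$2 + T$2$2 * A$2$2)^2 = 0"
    using h2[of A] by (simp add: E)
  have eB: "(T$1$1 * B$1$1 + T$1$2 * B$2$1)^2 + (T$2$1 * B$1$2 + T$2$2 * B$2$2)^2 = 0"
    using h2[of B] by (simp add: E)
  have eAB: "((T ** (A ** B))$1$1)^2 + ((T ** (A ** B))$2$2)^2 = 0" using h2[of "A ** B"] by (simp add: matrix_mul_assoc)
  have eBA: "((T ** (B ** A))$1$1)^2 + ((T ** (B ** A))$2$2)^2 = 0" using h2[of "B ** A"] by (simp add: matrix_mul_assoc)
  have tnz: "T$1$1 \<noteq> 0 \<or> T$1$2 \<noteq> 0" using dT by (auto simp: E)
  have dA': "A$1$1 * A$2$2 - A$1$2 * A$2$1 = 1" and dB': "B$1$1 * B$2$2 - B$1$2 * B$2$1 = 1"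
    using dA dB by (simp_all add: det_2)
  consider "A$1$2 = 0 \<and> A$2$1 = 0" | "A$1$1 = 0 \<and> A$2$2 = 0" using sA scomm_J0 by blast
  then show ?thesis
  proof cases
    case Ad: 1
    consider "B$1$2 = 0 \<and> B$2$1 = 0" | "B$1$1 = 0 \<and> B$2$2 = 0" using sB scomm_J0 by blast
    then show ?thesis
    proof cases
      case Bd: 1
      let ?Y = "mk 2 0 0 (1/2)"
      have "det ?Y = 1" "scomm ?Y A" "scomm ?Y B" "?Y \<noteq> mat 1" "?Y \<noteq> - mat 1" "?Y \<noteq> J0" "?Y \<noteq> - J0"
        using Ad Bd by (auto simp: scomm_def EE J0_entries)
      then show ?thesis by blast
    next
      case Bo: 2
      have b21: "B$2$1 \<noteq> 0" and b12: "B$1$2 \<noteq> 0" using dB' Bo by auto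
      have e1: "(T$1$1)^2 * ((A$1$1)^2 - (A$2$2)^2) = 0"
        using eI eA Ad dA' by (simp add: power2_eq_square) algebra
      have e2: "(T$1$2 * B$2$1)^2 * ((A$1$1)^2 - (A$2$2)^2) = 0"
        using eB eBA Ad Bo dA' by (simp add: E power2_eq_square) algebra
      have "(A$1$1)^2 = (A$2$2)^2" using e1 e2 tnz b21 by auto
      then have "scomm B A" using diag_offdiag_scomm Ad Bo by blast
      moreover have "scomm B B" by (simp add: scomm_def)
      moreover have "B \<noteq> mat 1" "B \<noteq> - mat 1" "B \<noteq> J0" "B \<noteq> - J0" using b12 by (auto simp: E J0_entries)
      ultimately show ?thesis using dB by blast
    qed
  next
    case Ao: 2
    have a21: "A$2$1 \<noteq> 0" and a12: "A$1$2 \<noteq> 0" using dA' Ao by auto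
    consider "B$1$2 = 0 \<and> B$2$1 = 0" | "B$1$1 = 0 \<and> B$2$2 = 0" using sB scomm_J0 by blast
    then show ?thesis
    proof cases
      case Bd: 1
      have e1: "(T$1$1)^2 * ((B$1$1)^2 - (B$2$2)^2) = 0"
        using eI eB Bd dB' by (simp add: power2_eq_square) algebra
      have e2: "(T$1$2 * A$2$1)^2 * ((B$1$1)^2 - (B$2$2)^2) = 0"
        using eA eAB Ao Bd dB' by (simp add: E power2_eq_square) algebra
      have "(B$1$1)^2 = (B$2$2)^2" using e1 e2 tnz a21 by auto
      then have "scomm A B" using diag_offdiag_scomm Ao Bd by blast
      moreover have "scomm A A" by (simp add: scomm_def)
      moreover have "A \<noteq> mat 1" "A \<noteq> - mat 1" "A \<noteq> J0" "A \<noteq> - J0" using a12 by (auto simp: E J0_entries)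
      ultimately show ?thesis using dA by blast
    next
      case Bo: 2
      define d1 where "d1 = A$1$2 * B$2$1"
      define d2 where "d2 = A$2$1 * B$1$2"
      have AB: "(A ** B)$1$1 = d1" "(A ** B)$2$2 = d2" "(A ** B)$1$2 = 0" "(A ** B)$2$1 = 0"
        using Ao Bo by (simp_all add: E d1_def d2_def)
      have BA: "(B ** A)$1$1 = d2" "(B ** A)$2$2 = d1" "(B ** A)$1$2 = 0" "(B ** A)$2$1 = 0"
        using Ao Bo by (simp_all add: E d1_def d2_def mult.commute)
      have dd: "d1 * d2 = 1" using dA' dB' Ao Bo unfolding d1_def d2_def by algebra
      have eAB': "(T$1$1 * d1)^2 + (T$2$2 * d2)^2 = 0"
        using eAB by (simp add: mm_entries[of T "A ** B"] AB)
      have e1: "(T$1$1)^2 * (d1^2 - d2^2) = 0"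
        using eI eAB' dd by (simp add: power2_eq_square) algebra
      have e2: "(T$1$2)^2 * (d1^2 - d2^2) = 0"
        using eA eB Ao Bo unfolding d1_def d2_def by (simp add: power2_eq_square) algebra
      have "d1^2 = d2^2" using e1 e2 tnz by auto
      then have "d1 = d2 \<or> d1 = - d2" using sq_eq by blast
      then have "scomm A B" unfolding scomm_def by (auto simp: mat2_eq_iff AB BA)
      moreover have "scomm A A" by (simp add: scomm_def)
      moreover have "A \<noteq> mat 1" "A \<noteq> - mat 1" "A \<noteq> J0" "A \<noteq> - J0" using a12 by (auto simp: E J0_entries)
      ultimately show ?thesis using dA by blast
    qed
  qed
qed


lemma card2_elems:
  assumes "card S = 2" "a \<in> S" "b \<in> S" "a \<noteq> b" "c \<in> S"
  shows "c = a \<or> c = b"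
proof (rule ccontr)
  assume "\<not> (c = a \<or> c = b)"
  have fin: "finite S" using assms(1) card.infinite by fastforce
  have "card {a, b, c} = 3" using \<open>\<not> (c = a \<or> c = b)\<close> assms(4) by auto
  moreover have "card {a, b, c} \<le> card S" using fin assms(2,3,5) by (intro card_mono) auto
  ultimately show False using assms(1) by simp
qed

lemma psl_class_eq: "psl_class X = psl_class Y \<longleftrightarrow> X = Y \<or> X = - Y"
  unfolding psl_class_def by (auto simp: doubleton_eq_iff)

lemma eval_surf_single: "eval (surf_assign A B) [(Ga,False)] = A" "eval (surf_assign A B) [(Gb,False)] = B"
  by (simp_all add: surf_assign_def)

lemma cent_mem:
  assumes "det A = 1" "det B = 1" "det Y = 1" "scomm Y A" "scomm Y B"
  shows "psl_class Y \<in> centraliser_img A B"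
proof -
  have "scomm Y (eval (surf_assign A B) w)" if "surface_word w" for w
    using assms that
    by (intro scomm_eval[OF sl_surf]) (auto dest: letters_surface simp: surf_assign_def)
  then show ?thesis unfolding centraliser_img_def SL2_def scomm_def using assms(3) by blast
qed

lemma cent_elem:
  assumes "c \<in> centraliser_img A B"
  shows "\<exists>X. c = psl_class X \<and> det X = 1 \<and> scomm X A \<and> scomm X B"
proof -
  obtain X where X: "c = psl_class X" "X \<in> SL2" "\<forall>w. surface_word w \<longrightarrow> scomm X (eval (surf_assign A B) w)"
    using assms unfolding centraliser_img_def scomm_def by blast
  have "scomm X A" "scomm X B" using X(3) surf_words(1,2) eval_surf_single by metis+
  then show ?thesis using X SL2_def by auto
qed

lemma cent_facts:
  assumes dA: "det A = 1" and dB: "det B = 1" and c2: "card (centraliser_img A B) = 2"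
  shows "\<exists>C. det C = 1 \<and> C \<noteq> mat 1 \<and> C \<noteq> - mat 1 \<and> scomm C A \<and> scomm C B \<and>
     (\<forall>Y. det Y = 1 \<and> scomm Y A \<and> scomm Y B \<longrightarrow> Y = mat 1 \<or> Y = - mat 1 \<or> Y = C \<or> Y = - C)"
proof -
  let ?S = "centraliser_img A B"
  have I: "psl_class (mat 1) \<in> ?S" using cent_mem[OF dA dB] by (simp add: scomm_def)
  have "?S \<noteq> {psl_class (mat 1)}" using c2 by auto
  then obtain c where c: "c \<in> ?S" "c \<noteq> psl_class (mat 1)" using I by blast
  obtain C where C: "c = psl_class C" "det C = 1" "scomm C A" "scomm C B" using cent_elem[OF c(1)] by blast
  have nC: "C \<noteq> mat 1" "C \<noteq> - mat 1" using c(2) C(1) psl_class_eq by auto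
  have "Y = mat 1 \<or> Y = - mat 1 \<or> Y = C \<or> Y = - C" if "det Y = 1" "scomm Y A" "scomm Y B" for Y
  proof -
    have "psl_class Y \<in> ?S" using cent_mem[OF dA dB that] .
    then have "psl_class Y = psl_class (mat 1) \<or> psl_class Y = c" using card2_elems[OF c2 I c(1)] c(2) by metis
    then show ?thesis using C(1) psl_class_eq by auto
  qed
  then show ?thesis using C nC by blast
qed

lemma scomm_mult_self: "scomm C A \<Longrightarrow> scomm (C ** C) A"
proof -
  assume s: "scomm C A"
  have "C ** C ** A = A ** (C ** C)"
    using s unfolding scomm_def
  proof
    assume h: "C ** A = A ** C"
    have "C ** C ** A = C ** (C ** A)" by (simp add: matrix_mul_assoc)
    also have "\<dots> = C ** (A ** C)" by (simp add: h)
    also have "\<dots> = (C ** A) ** C" by (simp add: matrix_mul_assoc)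
    also have "\<dots> = (A ** C) ** C" by (simp add: h)
    also have "\<dots> = A ** (C ** C)" by (simp add: matrix_mul_assoc)
    finally show ?thesis .
  next
    assume h: "C ** A = - (A ** C)"
    have "C ** C ** A = C ** (C ** A)" by (simp add: matrix_mul_assoc)
    also have "\<dots> = C ** (- (A ** C))" by (simp add: h)
    also have "\<dots> = - ((C ** A) ** C)" by (simp add: matrix_mul_assoc)
    also have "\<dots> = - ((- (A ** C)) ** C)" by (simp add: h)
    also have "\<dots> = A ** (C ** C)" by (simp add: matrix_mul_assoc)
    finally show ?thesis .
  qed
  then show ?thesis unfolding scomm_def by blast
qed

lemma sq_one_scalar:
  fixes C :: mat2
  assumes d: "det C = 1" and cc: "C ** C = mat 1"
  shows "C = mat 1 \<or> C = - mat 1"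
proof -
  have "mat (trace C) ** C = mat 2" using CH2[OF d] cc
    by (simp add: E)
  then have h: "trace C * C$1$2 = 0" "trace C * C$2$1 = 0" "trace C * C$1$1 = 2" "trace C * C$2$2 = 2"
    by (simp_all add: E)
  then have t: "trace C \<noteq> 0" by auto
  then have "C$1$2 = 0" "C$2$1 = 0" using h by auto
  moreover have "C$1$1 = C$2$2" using h(3,4) t by (metis mult_left_cancel)
  moreover have "C$1$1 * C$2$2 - C$1$2 * C$2$1 = 1" using d by (simp add: det_2)
  ultimately have "C$1$1 * C$1$1 = 1" "C$1$2 = 0" "C$2$1 = 0" "C$1$1 = C$2$2" by auto
  then have "C$1$1 = 1 \<or> C$1$1 = -1"
    by (metis square_eq_1_iff power2_eq_square)
  then show ?thesis using \<open>C$1$2 = 0\<close> \<open>C$2$1 = 0\<close> \<open>C$1$1 = C$2$2\<close> by (auto simp: E)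
qed

lemma C_sq:
  assumes dC: "det C = 1" and n1: "C \<noteq> mat 1" and n2: "C \<noteq> - mat 1" and sA: "scomm C A" and sB: "scomm C B"
    and ne: "\<forall>Y. det Y = 1 \<and> scomm Y A \<and> scomm Y B \<longrightarrow> Y = mat 1 \<or> Y = - mat 1 \<or> Y = C \<or> Y = - C"
  shows "C ** C = - mat 1"
proof -
  have "det (C ** C) = 1" using dC by (simp add: det_mult2)
  then have "C ** C = mat 1 \<or> C ** C = - mat 1 \<or> C ** C = C \<or> C ** C = - C"
    using ne scomm_mult_self[OF sA] scomm_mult_self[OF sB] by blast
  moreover have "C ** C \<noteq> mat 1" using sq_one_scalar[OF dC] n1 n2 by blast
  moreover have "C ** C \<noteq> C"
  proof
    assume "C ** C = C"
    then have "adj2 C ** (C ** C) = adj2 C ** C" by simp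
    then show False using dC n1 by (simp add: adj_cancel_left adj_left1)
  qed
  moreover have "C ** C \<noteq> - C"
  proof
    assume "C ** C = - C"
    then have "adj2 C ** (C ** C) = adj2 C ** (- C)" by simp
    then show False using dC n2 by (simp add: adj_cancel_left adj_left1)
  qed
  ultimately show ?thesis by blast
qed

lemma ker_dep:
  fixes M :: mat2
  assumes "M \<noteq> 0" "M *v v = 0" "M *v u = 0" "v \<noteq> 0"
  shows "\<exists>m. u = m *s v"
proof -
  have h: "M$1$1 * v$1 + M$1$2 * v$2 = 0" "M$2$1 * v$1 + M$2$2 * v$2 = 0"
    "M$1$1 * u$1 + M$1$2 * u$2 = 0" "M$2$1 * u$1 + M$2$2 * u$2 = 0"
    using assms(2,3) by (simp_all add: EE)
  have "M$1$1 * (v$1 * u$2 - u$1 * v$2) = 0" using h by algebra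
  moreover have "M$1$2 * (v$1 * u$2 - u$1 * v$2) = 0" using h by algebra
  moreover have "M$2$1 * (v$1 * u$2 - u$1 * v$2) = 0" using h by algebra
  moreover have "M$2$2 * (v$1 * u$2 - u$1 * v$2) = 0" using h by algebra
  moreover have "M$1$1 \<noteq> 0 \<or> M$1$2 \<noteq> 0 \<or> M$2$1 \<noteq> 0 \<or> M$2$2 \<noteq> 0"
    using assms(1) by (auto simp: mat2_eq_iff)
  ultimately have "v$1 * u$2 - u$1 * v$2 = 0" by auto
  then have "det (cols v u) = 0" by (simp add: EE)
  then show ?thesis using dep_of_det0[OF assms(4)] by blast
qed

lemma commute_scalar:
  fixes A B K :: mat2
  assumes irr: "irreducible2 A B" and cA: "K ** A = A ** K" and cB: "K ** B = B ** K"
  shows "\<exists>c. K = mat c"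
proof -
  define t where "t = trace K"
  define d where "d = det K"
  define l where "l = (t + csqrt (t^2 - 4 * d)) / 2"
  have l0: "l^2 - t * l + d = 0" unfolding l_def
    by (simp add: power2_eq_square field_simps) (simp add: power2_eq_square[symmetric] algebra_simps)
  obtain v where v: "v \<noteq> 0" "K *v v = l *s v" using eig_exists[of l K] l0 t_def d_def by auto
  define M where "M = K - mat l"
  have Mv: "M *v v = 0" unfolding M_def using v(2) by (simp add: EE algebra_simps)
  show ?thesis
  proof (cases "M = 0")
    case True
    then have "K = mat l" unfolding M_def by simp
    then show ?thesis by blast
  next
    case False
    have ml: "mat l ** X = X ** mat l" for X :: mat2 by (rule matc_comm)
    have dist1: "(K - mat l) ** X = K ** X - mat l ** X" "X ** (K - mat l) = X ** K - X ** mat l" for X :: mat2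
      by (simp_all add: EE algebra_simps)
    have MA: "M ** A = A ** M" "M ** B = B ** M" unfolding M_def dist1 using cA cB ml by simp_all
    have "M *v (A *v v) = (M ** A) *v v" by (simp add: matrix_vector_mul_assoc)
    also have "\<dots> = A *v (M *v v)" unfolding MA(1) by (simp add: matrix_vector_mul_assoc)
    finally have "M *v (A *v v) = 0" using Mv by simp
    then obtain m1 where m1: "A *v v = m1 *s v" using ker_dep[OF False Mv _ v(1)] by blast
    have "M *v (B *v v) = (M ** B) *v v" by (simp add: matrix_vector_mul_assoc)
    also have "\<dots> = B *v (M *v v)" unfolding MA(2) by (simp add: matrix_vector_mul_assoc)
    finally have "M *v (B *v v) = 0" using Mv by simp
    then obtain m2 where m2: "B *v v = m2 *s v" using ker_dep[OF False Mv _ v(1)] by blast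
    show ?thesis using common_eig_irr[OF irr v(1) m1 m2] by blast
  qed
qed

lemma sigma_nonzero:
  fixes A B C :: mat2
  assumes irr: "irreducible2 A B" and dC: "det C = 1" and n1: "C \<noteq> mat 1" and n2: "C \<noteq> - mat 1"
  shows "\<not> (C ** A = A ** C \<and> C ** B = B ** C)"
proof
  assume "C ** A = A ** C \<and> C ** B = B ** C"
  then obtain c where c: "C = mat c" using commute_scalar[OF irr] by blast
  then have "c * c = 1" using dC by (simp add: EE)
  then have "c = 1 \<or> c = -1" by (metis square_eq_1_iff power2_eq_square)
  then show False using c n1 n2 by (auto simp: EE)
qed

definition cj :: "mat2 \<Rightarrow> mat2 \<Rightarrow> mat2" where "cj P X = adj2 P ** X ** P"

lemma cj_mult: "det P = 1 \<Longrightarrow> cj P (X ** Y) = cj P X ** cj P Y"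
proof -
  assume d: "det P = 1"
  have "cj P X ** cj P Y = adj2 P ** X ** (P ** adj2 P) ** Y ** P" unfolding cj_def by (simp add: matrix_mul_assoc)
  also have "\<dots> = cj P (X ** Y)" unfolding cj_def using d by (simp add: adj2_right matrix_mul_assoc)
  finally show ?thesis by simp
qed

lemma cj_neg: "cj P (- X) = - cj P X" unfolding cj_def by simp
lemma cj_one: "det P = 1 \<Longrightarrow> cj P (mat 1) = mat 1" unfolding cj_def by (simp add: adj_left1)
lemma cj_det: "det P = 1 \<Longrightarrow> det (cj P X) = det X" unfolding cj_def by (simp add: det_mult2)
lemma cj_trace: "det P = 1 \<Longrightarrow> trace (cj P X) = trace X" unfolding cj_def by (rule trace_conj)
lemma cj_inv: "det P = 1 \<Longrightarrow> cj P (P ** Y ** adj2 P) = Y"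
proof -
  assume d: "det P = 1"
  have "cj P (P ** Y ** adj2 P) = (adj2 P ** P) ** Y ** (adj2 P ** P)" unfolding cj_def by (simp add: matrix_mul_assoc)
  then show ?thesis using d by (simp add: adj2_left)
qed
lemma uncj: "det P = 1 \<Longrightarrow> P ** cj P X ** adj2 P = X"
proof -
  assume d: "det P = 1"
  have "P ** cj P X ** adj2 P = (P ** adj2 P) ** X ** (P ** adj2 P)" unfolding cj_def by (simp add: matrix_mul_assoc)
  then show ?thesis using d by (simp add: adj2_right)
qed
lemma cj_inj: "det P = 1 \<Longrightarrow> cj P X = cj P Y \<Longrightarrow> X = Y"
proof -
  assume d: "det P = 1" and e: "cj P X = cj P Y"
  have "X = P ** cj P X ** adj2 P" using uncj[OF d] by simp
  also have "\<dots> = P ** cj P Y ** adj2 P" using e by simp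
  also have "\<dots> = Y" using uncj[OF d] by simp
  finally show ?thesis .
qed

lemma cj_scomm: "det P = 1 \<Longrightarrow> scomm (cj P K) (cj P X) \<longleftrightarrow> scomm K X"
proof -
  assume d: "det P = 1"
  have 1: "cj P K ** cj P X = cj P (K ** X)" "cj P X ** cj P K = cj P (X ** K)"
    using cj_mult[OF d] by simp_all
  have "cj P K ** cj P X = cj P X ** cj P K \<longleftrightarrow> K ** X = X ** K"
    unfolding 1 using cj_inj[OF d, of "K ** X" "X ** K"] by auto
  moreover have "cj P K ** cj P X = - (cj P X ** cj P K) \<longleftrightarrow> K ** X = - (X ** K)"
    unfolding 1 cj_neg[symmetric] using cj_inj[OF d, of "K ** X" "- (X ** K)"] by auto
  ultimately show ?thesis unfolding scomm_def by simp
qed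

lemma trace_C_zero:
  fixes C :: mat2
  assumes dC: "det C = 1" and cc: "C ** C = - mat 1"
  shows "trace C = 0"
proof (rule ccontr)
  assume t: "trace C \<noteq> 0"
  have "mat (trace C) ** C = (0::mat2)" using CH2[OF dC] cc by (simp add: EE)
  then have "C$1$1 = 0" "C$1$2 = 0" "C$2$1 = 0" "C$2$2 = 0" using t by (simp_all add: EE)
  then show False using dC by (simp add: det_2)
qed

lemma diagonalize_C:
  fixes C :: mat2
  assumes dC: "det C = 1" and cc: "C ** C = - mat 1"
  shows "\<exists>P. det P = 1 \<and> cj P C = J0"
proof -
  have t: "trace C = 0" using trace_C_zero[OF dC cc] .
  obtain v1 where v1: "v1 \<noteq> 0" "C *v v1 = \<i> *s v1" using eig_exists[of "\<i>" C] t dC by auto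
  obtain v2 where v2: "v2 \<noteq> 0" "C *v v2 = (- \<i>) *s v2" using eig_exists[of "- \<i>" C] t dC by auto
  define Q where "Q = cols v1 v2"
  have CQ: "C ** Q = Q ** J0" unfolding Q_def J0_def cols_mult_left cols_mult_mk cols_eq using v1 v2
    by simp
  have dQ: "det Q \<noteq> 0"
  proof
    assume "det Q = 0"
    then obtain m where m: "v2 = m *s v1" using dep_of_det0[OF v1(1)] unfolding Q_def by blast
    have "(- \<i>) *s (m *s v1) = C *v (m *s v1)" using v2(2) m by simp
    also have "\<dots> = m *s (\<i> *s v1)" using v1(2) by (simp add: mv_smult)
    finally have "(2 * \<i> * m) *s v1 = 0" by (simp add: vec2_eq_iff vector_scalar_mult_def algebra_simps)
    then have "m = 0" using v1(1) by (auto simp: vec2_eq_iff vector_scalar_mult_def)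
    then show False using v2(1) m by (simp add: vec2_eq_iff vector_scalar_mult_def)
  qed
  obtain P where "det P = 1" "\<forall>X Y. X ** Q = Q ** Y \<longrightarrow> adj2 P ** X ** P = Y"
    using conj_from_intertwine[OF dQ] by blast
  then show ?thesis using CQ unfolding cj_def by blast
qed

lemma dist:
  fixes A B C T :: mat2
  assumes dA: "det A = 1" and dB: "det B = 1" and dT: "det T = 1" and dC: "det C = 1"
    and cc: "C ** C = - mat 1" and sA: "scomm C A" and sB: "scomm C B"
    and ne: "\<forall>Y. det Y = 1 \<and> scomm Y A \<and> scomm Y B \<longrightarrow> Y = mat 1 \<or> Y = - mat 1 \<or> Y = C \<or> Y = - C"
  shows "\<exists>W\<in>{mat 1, A, B, A ** B, B ** A}. (trace (T ** W))^2 \<noteq> (trace (T ** W ** C))^2"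
proof (rule ccontr)
  assume "\<not> ?thesis"
  then have h: "\<And>W. W \<in> {mat 1, A, B, A ** B, B ** A} \<Longrightarrow> (trace (T ** W))^2 = (trace (T ** W ** C))^2"
    by blast
  obtain P where P: "det P = 1" "cj P C = J0" using diagonalize_C[OF dC cc] by blast
  let ?A = "cj P A" and ?B = "cj P B" and ?T = "cj P T"
  have h1: "(trace (?T ** W'))^2 = (trace (?T ** W' ** J0))^2" if "W' \<in> {mat 1, ?A, ?B, ?A ** ?B, ?B ** ?A}" for W'
  proof -
    have "W' \<in> cj P ` {mat 1, A, B, A ** B, B ** A}"
      using that by (simp add: cj_one[OF P(1)] cj_mult[OF P(1)])
    then obtain W where W: "W \<in> {mat 1, A, B, A ** B, B ** A}" "W' = cj P W" by blast
    have "?T ** W' = cj P (T ** W)" "?T ** W' ** J0 = cj P (T ** W ** C)"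
      using W(2) P by (simp_all add: cj_mult)
    then show ?thesis using h[OF W(1)] by (simp add: cj_trace[OF P(1)])
  qed
  have sc: "scomm J0 ?A" "scomm J0 ?B" using cj_scomm[OF P(1)] sA sB P(2) by metis+
  have dd: "det ?A = 1" "det ?B = 1" "det ?T = 1" using dA dB dT cj_det[OF P(1)] by simp_all
  have "\<exists>Y. det Y = 1 \<and> scomm Y ?A \<and> scomm Y ?B \<and> Y \<noteq> mat 1 \<and> Y \<noteq> - mat 1 \<and> Y \<noteq> J0 \<and> Y \<noteq> - J0"
    by (rule dist_coord[OF dd(1) dd(2) dd(3) sc(1) sc(2) h1])
  then obtain Y1 where Y1: "det Y1 = 1" "scomm Y1 ?A" "scomm Y1 ?B" "Y1 \<noteq> mat 1" "Y1 \<noteq> - mat 1" "Y1 \<noteq> J0" "Y1 \<noteq> - J0"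
    by blast
  define Y where "Y = P ** Y1 ** adj2 P"
  have cY: "cj P Y = Y1" unfolding Y_def using cj_inv[OF P(1)] .
  have "det Y = 1" using Y1(1) cY cj_det[OF P(1), of Y] by simp
  moreover have "scomm Y A" "scomm Y B" using Y1(2,3) cY cj_scomm[OF P(1)] by metis+
  ultimately have "Y = mat 1 \<or> Y = - mat 1 \<or> Y = C \<or> Y = - C" using ne by blast
  then have "Y1 = mat 1 \<or> Y1 = - mat 1 \<or> Y1 = J0 \<or> Y1 = - J0"
  proof (elim disjE)
    assume "Y = mat 1" then show ?thesis using cY cj_one[OF P(1)] by simp
  next
    assume "Y = - mat 1" then show ?thesis using cY cj_one[OF P(1)] cj_neg[of P "mat 1"] by simp
  next
    assume "Y = C" then show ?thesis using cY P(2) by simp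
  next
    assume "Y = - C" then show ?thesis using cY P(2) cj_neg[of P C] by simp
  qed
  then show False using Y1 by blast
qed

lemma conjC_sign:
  fixes C X :: mat2
  assumes d: "det C = 1" and s: "scomm C X"
  shows "adj2 C ** X ** C = (if C ** X \<noteq> X ** C then - X else X)"
proof (cases "C ** X = X ** C")
  case True
  then show ?thesis using conj_eq_iff[OF d, of X X] by simp
next
  case False
  then have "C ** X = - (X ** C)" using s scomm_def by blast
  then have "C ** (- X) = X ** C" by simp
  then have "- X = adj2 C ** X ** C" using conj_eq_iff[OF d, of "- X" X] by simp
  then show ?thesis using False by simp
qed

locale bund =
  fixes \<phi> :: "gen \<Rightarrow> word" and A B C T0 :: mat2
  assumes surfA: "surface_word (\<phi> Ga)" and surfB: "surface_word (\<phi> Gb)"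
    and aut: "is_aut_F2 \<phi>"
    and dA: "det A = 1" and dB: "det B = 1" and irr: "irreducible2 A B"
    and dC: "det C = 1" and nC1: "C \<noteq> mat 1" and nC2: "C \<noteq> - mat 1"
    and sCA: "scomm C A" and sCB: "scomm C B"
    and ne: "\<forall>Y. det Y = 1 \<and> scomm Y A \<and> scomm Y B \<longrightarrow> Y = mat 1 \<or> Y = - mat 1 \<or> Y = C \<or> Y = - C"
    and psl0: "psl_rep_M \<phi> (asg A B T0)" and dT0: "det T0 = 1"
begin

definition W :: "gen \<Rightarrow> mat2" where "W g = eval (surf_assign A B) (\<phi> g)"

lemma surf_phi: "g \<in> {Ga, Gb} \<Longrightarrow> surface_word (\<phi> g)"
  using surfA surfB by auto

lemma eval_asg_phi: "g \<in> {Ga, Gb} \<Longrightarrow> eval (asg A B T) (\<phi> g) = W g"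
  unfolding W_def using surf_phi eval_asg_surf by blast

lemma det_W: "det (W g) = 1"
  unfolding W_def using det_eval[OF sl_surf[OF dA dB]] .

lemma W_neq: "- W g \<noteq> W g"
  using neg_neq_self det_W by simp

lemma CC: "C ** C = - mat 1"
  using C_sq[OF dC nC1 nC2 sCA sCB ne] .

lemma psl_eps_asg: "psl_rep_M \<phi> (asg A B T) \<Longrightarrow> g \<in> {Ga, Gb} \<Longrightarrow>
   adj2 T ** asg A B T g ** T = (if epsv \<phi> (asg A B T) g then - W g else W g)"
  using psl_eps[of \<phi> "asg A B T" g] eval_asg_phi by simp

lemma det_of_psl: "psl_rep_M \<phi> (asg A B T) \<Longrightarrow> det T = 1"
  unfolding psl_rep_iff sl_def by (metis asg_simps(3))

lemma uniq:
  assumes p: "psl_rep_M \<phi> (asg A B T)"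
  shows "T = T0 \<or> T = - T0 \<or> T = C ** T0 \<or> T = - (C ** T0)"
proof -
  have dT: "det T = 1" using det_of_psl[OF p] .
  define K where "K = T ** adj2 T0"
  have dK: "det K = 1" unfolding K_def using dT dT0 by (simp add: det_mult2)
  have sK: "scomm K X" if g: "g \<in> {Ga, Gb}" and X: "X = asg A B T0 g" for g X
  proof -
    have e1: "adj2 T ** X ** T = (if epsv \<phi> (asg A B T) g then - W g else W g)"
      using psl_eps_asg[OF p g] X g by auto
    have e0: "adj2 T0 ** X ** T0 = (if epsv \<phi> (asg A B T0) g then - W g else W g)"
      using psl_eps_asg[OF psl0 g] X by auto
    have "adj2 T ** X ** T = adj2 T0 ** X ** T0 \<or> adj2 T ** X ** T = - (adj2 T0 ** X ** T0)"
      using e1 e0 by (cases "epsv \<phi> (asg A B T) g"; cases "epsv \<phi> (asg A B T0) g") auto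
    moreover have "X ** K = T ** (adj2 T ** X ** T) ** adj2 T0"
      unfolding K_def using dT by (simp add: matrix_mul_assoc adj_right1)
    moreover have "K ** X = T ** (adj2 T0 ** X ** T0) ** adj2 T0"
    proof -
      have "T ** (adj2 T0 ** X ** T0) ** adj2 T0 = T ** adj2 T0 ** X ** (T0 ** adj2 T0)"
        by (simp add: matrix_mul_assoc)
      then show ?thesis unfolding K_def using dT0 by (simp add: adj_right1)
    qed
    ultimately have "X ** K = K ** X \<or> X ** K = - (K ** X)" by auto
    then show ?thesis unfolding scomm_def by auto
  qed
  have "scomm K A" using sK[of Ga A] by simp
  moreover have "scomm K B" using sK[of Gb B] by simp
  ultimately have "K = mat 1 \<or> K = - mat 1 \<or> K = C \<or> K = - C" using ne dK by blast
  moreover have "T = K ** T0"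
  proof -
    have "K ** T0 = T ** (adj2 T0 ** T0)" unfolding K_def by (simp add: matrix_mul_assoc)
    then show ?thesis using dT0 by (simp add: adj_left1)
  qed
  ultimately show ?thesis by auto
qed

definition sig :: "gen \<Rightarrow> bool" where
  "sig g \<longleftrightarrow> (g = Ga \<and> C ** A \<noteq> A ** C) \<or> (g = Gb \<and> C ** B \<noteq> B ** C)"

lemma sig_simps[simp]: "sig Ga = (C ** A \<noteq> A ** C)" "sig Gb = (C ** B \<noteq> B ** C)" "sig Gt = False"
  by (simp_all add: sig_def)

lemma conjC_gen: "g \<in> {Ga, Gb} \<Longrightarrow> adj2 C ** asg A B T g ** C = (if sig g then - asg A B T g else asg A B T g)"
  using conjC_sign[OF dC sCA] conjC_sign[OF dC sCB] by auto

lemma sig_nonzero: "sig Ga \<or> sig Gb"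
  using sigma_nonzero[OF irr dC nC1 nC2] by simp

lemma conjC_eval: "surface_word w \<Longrightarrow>
    adj2 C ** eval (surf_assign A B) w ** C = (if wpar sig w then - eval (surf_assign A B) w else eval (surf_assign A B) w)"
proof -
  assume w: "surface_word w"
  have s: "sl (surf_assign A B)" using sl_surf[OF dA dB] .
  have "adj2 C ** eval (surf_assign A B) w ** C = eval (conjf C (surf_assign A B)) w"
    using eval_conjf[OF s dC] by simp
  also have "\<dots> = eval (flip sig (surf_assign A B)) w"
  proof (rule eval_cong)
    fix g assume "g \<in> letters w"
    then have g: "g = Ga \<or> g = Gb" using letters_surface[OF w] by blast
    have "adj2 C ** asg A B (mat 1) g ** C = (if sig g then - asg A B (mat 1) g else asg A B (mat 1) g)"
      using conjC_gen g by blast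
    then show "conjf C (surf_assign A B) g = flip sig (surf_assign A B) g"
      using g by (auto simp: conjf_app flip_app surf_assign_def)
  qed
  also have "\<dots> = (if wpar sig w then - eval (surf_assign A B) w else eval (surf_assign A B) w)"
    using eval_flip'[OF s] .
  finally show ?thesis .
qed

lemma eps_CT0:
  "psl_rep_M \<phi> (asg A B (C ** T0)) \<and>
   (\<forall>g\<in>{Ga, Gb}. epsv \<phi> (asg A B (C ** T0)) g = (epsv \<phi> (asg A B T0) g \<noteq> sig g))"
proof -
  have s: "sl (asg A B (C ** T0))" using sl_asg[OF dA dB] dC dT0 by (simp add: det_mult2)
  have e: "adj2 (asg A B (C ** T0) Gt) ** asg A B (C ** T0) g ** asg A B (C ** T0) Gt =
      (if (epsv \<phi> (asg A B T0) g \<noteq> sig g) then - eval (asg A B (C ** T0)) (\<phi> g) else eval (asg A B (C ** T0)) (\<phi> g))"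
    if g: "g \<in> {Ga, Gb}" for g
  proof -
    have x: "asg A B (C ** T0) g = asg A B T0 g" using g by auto
    have "adj2 (C ** T0) ** asg A B T0 g ** (C ** T0) = adj2 T0 ** (adj2 C ** asg A B T0 g ** C) ** T0"
      by (simp add: adj2_mult matrix_mul_assoc)
    also have "\<dots> = (if sig g then - (adj2 T0 ** asg A B T0 g ** T0) else adj2 T0 ** asg A B T0 g ** T0)"
      using conjC_gen[OF g] by simp
    also have "\<dots> = (if (epsv \<phi> (asg A B T0) g \<noteq> sig g) then - W g else W g)"
      using psl_eps_asg[OF psl0 g] by auto
    finally show ?thesis using x eval_asg_phi[OF g] by simp
  qed
  have "psl_rep_M \<phi> (asg A B (C ** T0))" unfolding psl_rep_iff using s e by (auto split: if_splits)
  moreover have "epsv \<phi> (asg A B (C ** T0)) g = (epsv \<phi> (asg A B T0) g \<noteq> sig g)" if "g \<in> {Ga, Gb}" for g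
    using eps_unique[where \<phi>=\<phi>, OF s e[OF that]] .
  ultimately show ?thesis by blast
qed

lemma fixed_sig:
  assumes g: "g \<in> {Ga, Gb}"
  shows "wpar sig (\<phi> g) = sig g"
proof -
  define K where "K = adj2 T0 ** C ** T0"
  have dK: "det K = 1" unfolding K_def using dC dT0 by (simp add: det_mult2)
  have Kconj: "adj2 K ** W g' ** K = (if sig g' then - W g' else W g')" if g': "g' \<in> {Ga, Gb}" for g'
  proof -
    define X where "X = asg A B T0 g'"
    define e where "e = epsv \<phi> (asg A B T0) g'"
    have eX: "adj2 T0 ** X ** T0 = (if e then - W g' else W g')"
      unfolding X_def e_def using psl_eps_asg[OF psl0 g'] by simp
    then have Wg: "W g' = (if e then - (adj2 T0 ** X ** T0) else adj2 T0 ** X ** T0)" by auto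
    have cX: "adj2 C ** X ** C = (if sig g' then - X else X)" unfolding X_def using conjC_gen[OF g'] .
    have gen: "adj2 K ** (adj2 T0 ** X ** T0) ** K = adj2 T0 ** (adj2 C ** X ** C) ** T0"
    proof -
      have "adj2 K = adj2 T0 ** adj2 C ** T0" unfolding K_def by (simp add: adj2_mult matrix_mul_assoc)
      then have "adj2 K ** (adj2 T0 ** X ** T0) ** K
          = adj2 T0 ** adj2 C ** (T0 ** adj2 T0) ** X ** (T0 ** adj2 T0) ** C ** T0"
        unfolding K_def by (simp add: matrix_mul_assoc)
      then show ?thesis using dT0 by (simp add: adj_right1 matrix_mul_assoc)
    qed
    show ?thesis unfolding Wg using gen cX by (cases e; cases "sig g'") auto
  qed
  have sKW: "scomm K (W g')" if "g' \<in> {Ga, Gb}" for g'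
    using Kconj[OF that] scomm_conj_iff[OF dK] by (cases "sig g'") auto
  define f' where "f' = (\<lambda>g. eval (asg A B T0) (\<phi> g))"
  have sl0: "sl (asg A B T0)" using sl_asg[OF dA dB dT0] .
  obtain \<psi> where psi: "surface_word (\<psi> Ga)" "surface_word (\<psi> Gb)"
    "\<forall>g\<in>{Ga, Gb}. red (wsubst \<phi> (\<psi> g)) = [(g, False)]"
    using aut unfolding is_aut_F2_def by blast
  have bk: "eval f' (\<psi> g') = asg A B T0 g'" if g': "g' \<in> {Ga, Gb}" for g'
  proof -
    have "eval f' (\<psi> g') = eval (asg A B T0) (wsubst \<phi> (\<psi> g'))"
      unfolding f'_def using eval_wsubst[OF sl0] by simp
    also have "\<dots> = eval (asg A B T0) (red (wsubst \<phi> (\<psi> g')))" using eval_red[OF sl0] by simp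
    also have "\<dots> = asg A B T0 g'" using psi(3) g' by auto
    finally show ?thesis .
  qed
  have sKf: "scomm K (eval f' (\<psi> g'))" if g': "g' \<in> {Ga, Gb}" for g'
  proof (rule scomm_eval)
    show "sl f'" unfolding f'_def using sl_evalf[OF sl0] .
    fix h assume "h \<in> letters (\<psi> g')"
    then have "h = Ga \<or> h = Gb" using letters_surface psi(1,2) g' by blast
    then show "scomm K (f' h)" unfolding f'_def using sKW eval_asg_phi by auto
  qed
  have "scomm K A" using sKf[of Ga] bk[of Ga] by simp
  moreover have "scomm K B" using sKf[of Gb] bk[of Gb] by simp
  ultimately have "K = mat 1 \<or> K = - mat 1 \<or> K = C \<or> K = - C" using ne dK by blast
  moreover have "C = T0 ** K ** adj2 T0"
  proof -
    have "T0 ** K ** adj2 T0 = (T0 ** adj2 T0) ** C ** (T0 ** adj2 T0)" unfolding K_def by (simp add: matrix_mul_assoc)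
    then show ?thesis using dT0 by (simp add: adj_right1)
  qed
  ultimately have KC: "K = C \<or> K = - C" using nC1 nC2 dT0 by (auto simp: adj_right1)
  then have "adj2 K ** W g ** K = adj2 C ** W g ** C" by auto
  also have "\<dots> = (if wpar sig (\<phi> g) then - W g else W g)" unfolding W_def using conjC_eval surf_phi[OF g] by blast
  finally show ?thesis using Kconj[OF g] W_neq by (cases "sig g"; cases "wpar sig (\<phi> g)") auto
qed

end

lemma bool_main:
  fixes naa nab nba nbb sa sb ea eb :: bool
  assumes det: "(naa \<and> nbb) \<noteq> (nba \<and> nab)"
    and nz: "sa \<or> sb"
    and fa: "((sa \<and> naa) \<noteq> (sb \<and> nba)) = sa" and fb: "((sa \<and> nab) \<noteq> (sb \<and> nbb)) = sb"
  shows "(naa \<and> \<not> nab \<and> \<not> nba \<and> nbb \<and>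
     \<not> ((\<exists>da db. ea = (da \<noteq> ((da \<and> naa) \<noteq> (db \<and> nba))) \<and> eb = (db \<noteq> ((da \<and> nab) \<noteq> (db \<and> nbb)))) \<and>
        (\<exists>da db. (ea \<noteq> sa) = (da \<noteq> ((da \<and> naa) \<noteq> (db \<and> nba))) \<and> (eb \<noteq> sb) = (db \<noteq> ((da \<and> nab) \<noteq> (db \<and> nbb))))))
   \<or> (\<not> (naa \<and> \<not> nab \<and> \<not> nba \<and> nbb) \<and>
      (\<forall>x y. (((x \<and> naa) \<noteq> (y \<and> nba)) = x \<and> ((x \<and> nab) \<noteq> (y \<and> nbb)) = y) \<longleftrightarrow> (x, y) = (False, False) \<or> (x, y) = (sa, sb)) \<and>
      ((\<exists>da db. ea = (da \<noteq> ((da \<and> naa) \<noteq> (db \<and> nba))) \<and> eb = (db \<noteq> ((da \<and> nab) \<noteq> (db \<and> nbb)))) \<longleftrightarrow>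
        (\<exists>da db. (ea \<noteq> sa) = (da \<noteq> ((da \<and> naa) \<noteq> (db \<and> nba))) \<and> (eb \<noteq> sb) = (db \<noteq> ((da \<and> nab) \<noteq> (db \<and> nbb))))))"
  using assms
  by (cases naa; cases nab; cases nba; cases nbb; cases sa; cases sb; cases ea; cases eb) (simp_all add: ex_bool_eq all_bool_eq)

lemma expsum_Nil[simp]: "expsum g [] = 0" by (simp add: expsum_def)
lemma expsum_Cons: "expsum g (x # xs) = (if fst x = g then (if snd x then -1 else 1) else 0) + expsum g xs"
  by (simp add: expsum_def)

lemma surface_Cons: "surface_word (x # xs) \<longleftrightarrow> (fst x = Ga \<or> fst x = Gb) \<and> surface_word xs"
  by (auto simp: surface_word_def letters_def)

lemma wpar_surf: "surface_word w \<Longrightarrow> wpar h w = ((h Ga \<and> odd (expsum Ga w)) \<noteq> (h Gb \<and> odd (expsum Gb w)))"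
proof (induction w)
  case Nil
  then show ?case by simp
next
  case (Cons x xs)
  then have x: "fst x = Ga \<or> fst x = Gb" and xs: "surface_word xs" using surface_Cons by auto
  show ?case using Cons.IH[OF xs] x
    by (cases "snd x") (auto simp: wpar_Cons expsum_Cons)
qed

lemma det_parity:
  assumes "ab_det \<phi> = 1"
  shows "(odd (expsum Ga (\<phi> Ga)) \<and> odd (expsum Gb (\<phi> Gb))) \<noteq> (odd (expsum Gb (\<phi> Ga)) \<and> odd (expsum Ga (\<phi> Gb)))"
proof -
  have "odd (expsum Ga (\<phi> Ga) * expsum Gb (\<phi> Gb) - expsum Gb (\<phi> Ga) * expsum Ga (\<phi> Gb))"
    using assms unfolding ab_det_def by simp
  then show ?thesis by auto
qed

lemma b1_eq: "card (hom_Z2 \<phi>) = 2 ^ k \<Longrightarrow> b1 \<phi> = k"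
  unfolding b1_def by (rule the_equality) (auto dest: power_inject_exp[of 2, THEN iffD1])

lemma hom_Z2_eq:
  assumes "surface_word (\<phi> Ga)" "surface_word (\<phi> Gb)"
  shows "hom_Z2 \<phi> = {(t, x, y). ((x \<and> odd (expsum Ga (\<phi> Ga))) \<noteq> (y \<and> odd (expsum Gb (\<phi> Ga)))) = x \<and>
      ((x \<and> odd (expsum Ga (\<phi> Gb))) \<noteq> (y \<and> odd (expsum Gb (\<phi> Gb)))) = y}"
  unfolding hom_Z2_def using wpar_surf[OF assms(1)] wpar_surf[OF assms(2)] by auto

lemma card_all: "card {(t::bool, x::bool, y::bool). True} = 8"
proof -
  have "{(t::bool, x::bool, y::bool). True} = UNIV" by auto
  then show ?thesis by (simp add: card_UNIV_bool)
qed

lemma card_two: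
  assumes "sa \<or> sb"
  shows "card {(t::bool, x::bool, y::bool). (x, y) = (False, False) \<or> (x, y) = (sa, sb)} = 4"
proof -
  have "{(t::bool, x::bool, y::bool). (x, y) = (False, False) \<or> (x, y) = (sa, sb)} =
     {(False, False, False), (True, False, False), (False, sa, sb), (True, sa, sb)}" by auto
  then show ?thesis using assms by auto
qed

lemma asg_neg: "asg A B (- T) = flip (\<lambda>g. g = Gt) (asg A B T)"
  by (rule ext) (simp add: flip_app asg_def split: gen.split)

lemma pchar_asg_neg: "det A = 1 \<Longrightarrow> det B = 1 \<Longrightarrow> det T = 1 \<Longrightarrow> pchar_M (asg A B (- T)) = pchar_M (asg A B T)"
  unfolding asg_neg using pchar_flip sl_asg by blast

lemma sl_rep_psl: "sl_rep_M \<phi> f \<Longrightarrow> psl_rep_M \<phi> f"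
  unfolding sl_rep_iff psl_rep_iff by auto

context bund
begin

abbreviation "naa \<equiv> odd (expsum Ga (\<phi> Ga))"
abbreviation "nba \<equiv> odd (expsum Gb (\<phi> Ga))"
abbreviation "nab \<equiv> odd (expsum Ga (\<phi> Gb))"
abbreviation "nbb \<equiv> odd (expsum Gb (\<phi> Gb))"

lemma wpar_phi: "g \<in> {Ga, Gb} \<Longrightarrow> wpar h (\<phi> g) = ((h Ga \<and> odd (expsum Ga (\<phi> g))) \<noteq> (h Gb \<and> odd (expsum Gb (\<phi> g))))"
  using wpar_surf surf_phi by blast

lemma epsv_neg: "epsv \<phi> (asg A B (- T)) g = epsv \<phi> (asg A B T) g" if "g \<in> {Ga, Gb}"
  using that eval_asg_phi unfolding epsv_def by auto

lemma lift_char: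
  assumes p: "psl_rep_M \<phi> (asg A B T)"
    and uT: "\<And>T'. psl_rep_M \<phi> (asg A B T') \<Longrightarrow> pchar_M (asg A B T') = pchar_M (asg A B T) \<Longrightarrow> T' = T \<or> T' = - T"
  shows "lifts \<phi> (pchar_M (asg A B T)) \<longleftrightarrow>
    (\<exists>da db. epsv \<phi> (asg A B T) Ga = (da \<noteq> ((da \<and> naa) \<noteq> (db \<and> nba))) \<and>
             epsv \<phi> (asg A B T) Gb = (db \<noteq> ((da \<and> nab) \<noteq> (db \<and> nbb))))"
proof
  assume "lifts \<phi> (pchar_M (asg A B T))"
  then obtain f where f: "sl_rep_M \<phi> f" "pchar_M f = pchar_M (asg A B T)" unfolding lifts_def by blast
  have pf: "psl_rep_M \<phi> f" using sl_rep_psl[OF f(1)] .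
  have e0: "\<not> epsv \<phi> f g" if "g \<in> {Ga, Gb}" for g using f(1) that sl_rep_iff_eps by blast
  have r: "restrS (pchar_M f) = pchar_S A B" using f(2) restr_asg by simp
  obtain T' h where T': "det T' = 1" "psl_rep_M \<phi> (asg A B T')" "pchar_M (asg A B T') = pchar_M f"
    "\<forall>g\<in>{Ga,Gb}. epsv \<phi> (asg A B T') g = (epsv \<phi> f g \<noteq> (h g \<noteq> wpar h (\<phi> g)))"
    using norm_rep[OF irr dA dB pf r] by blast
  have "T' = T \<or> T' = - T" using uT[OF T'(2)] T'(3) f(2) by simp
  then have eT: "epsv \<phi> (asg A B T) g = epsv \<phi> (asg A B T') g" if "g \<in> {Ga, Gb}" for g
    using epsv_neg[OF that, of T] by auto
  have "epsv \<phi> (asg A B T) g = (h g \<noteq> wpar h (\<phi> g))" if "g \<in> {Ga, Gb}" for g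
    using eT[OF that] T'(4) e0[OF that] that by auto
  then show "\<exists>da db. epsv \<phi> (asg A B T) Ga = (da \<noteq> ((da \<and> naa) \<noteq> (db \<and> nba))) \<and>
             epsv \<phi> (asg A B T) Gb = (db \<noteq> ((da \<and> nab) \<noteq> (db \<and> nbb)))"
    using wpar_phi[of Ga h] wpar_phi[of Gb h] by (intro exI[of _ "h Ga"] exI[of _ "h Gb"]) simp
next
  assume "\<exists>da db. epsv \<phi> (asg A B T) Ga = (da \<noteq> ((da \<and> naa) \<noteq> (db \<and> nba))) \<and>
             epsv \<phi> (asg A B T) Gb = (db \<noteq> ((da \<and> nab) \<noteq> (db \<and> nbb)))"
  then obtain da db where d: "epsv \<phi> (asg A B T) Ga = (da \<noteq> ((da \<and> naa) \<noteq> (db \<and> nba)))"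
     "epsv \<phi> (asg A B T) Gb = (db \<noteq> ((da \<and> nab) \<noteq> (db \<and> nbb)))" by blast
  define h where "h = (\<lambda>g. (g = Ga \<and> da) \<or> (g = Gb \<and> db))"
  have s: "sl (asg A B T)" using p psl_rep_iff by blast
  have "\<not> epsv \<phi> (flip h (asg A B T)) g" if g: "g \<in> {Ga, Gb}" for g
  proof -
    have "epsv \<phi> (flip h (asg A B T)) g = (epsv \<phi> (asg A B T) g \<noteq> (h g \<noteq> wpar h (\<phi> g)))"
      using eps_flip[OF p g] by blast
    then show ?thesis using d g wpar_phi[OF g, of h] unfolding h_def by auto
  qed
  moreover have "psl_rep_M \<phi> (flip h (asg A B T))" using eps_flip[OF p, of Ga h] by blast
  ultimately have "sl_rep_M \<phi> (flip h (asg A B T))" using sl_rep_iff_eps by blast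
  moreover have "pchar_M (flip h (asg A B T)) = pchar_M (asg A B T)" using pchar_flip[OF s] .
  ultimately show "lifts \<phi> (pchar_M (asg A B T))" unfolding lifts_def by blast
qed

end

theorem lemma4p4:
  fixes \<phi> :: "gen \<Rightarrow> word" and A B :: mat2
  assumes "hyperbolic_bundle \<phi>"
    and "A \<in> SL2" and "B \<in> SL2"
    and "irreducible2 A B"
    and "pchar_S A B \<in> rbar ` Xbar_M \<phi>"
    and "card (centraliser_img A B) = 2"
  shows "card (fibre \<phi> (pchar_S A B)) = 2 \<and> b1 \<phi> > 1 \<and>
    ((\<forall>c\<in>fibre \<phi> (pchar_S A B). \<not> lifts \<phi> c)
     \<or> (card {c\<in>fibre \<phi> (pchar_S A B). lifts \<phi> c} = 1 \<and> b1 \<phi> = 3)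
     \<or> (card {c\<in>fibre \<phi> (pchar_S A B). lifts \<phi> c} = 2 \<and> b1 \<phi> = 2))"
proof -
  have aut: "is_aut_F2 \<phi>" and adet: "ab_det \<phi> = 1" using assms(1) unfolding hyperbolic_bundle_def by auto
  have surfA: "surface_word (\<phi> Ga)" and surfB: "surface_word (\<phi> Gb)" using aut unfolding is_aut_F2_def by auto
  have dA: "det A = 1" and dB: "det B = 1" using assms(2,3) unfolding SL2_def by auto
  note irr = assms(4)
  obtain C where C: "det C = 1" "C \<noteq> mat 1" "C \<noteq> - mat 1" "scomm C A" "scomm C B"
    "\<forall>Y. det Y = 1 \<and> scomm Y A \<and> scomm Y B \<longrightarrow> Y = mat 1 \<or> Y = - mat 1 \<or> Y = C \<or> Y = - C"
    using cent_facts[OF dA dB assms(6)] by blast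
  obtain c0 where c0: "c0 \<in> Xbar_M \<phi>" "rbar c0 = pchar_S A B" using assms(5) by auto
  obtain f0 where f0: "psl_rep_M \<phi> f0" "c0 = pchar_M f0" using c0(1) unfolding Xbar_M_def by blast
  obtain T0 h0 where T0: "det T0 = 1" "psl_rep_M \<phi> (asg A B T0)" "pchar_M (asg A B T0) = pchar_M f0"
    using norm_rep[OF irr dA dB f0(1)] c0(2) f0(2) unfolding rbar_def by blast
  interpret bund \<phi> A B C T0
    using surfA surfB aut dA dB irr C T0 by unfold_locales auto
  define \<chi>1 where "\<chi>1 = pchar_M (asg A B T0)"
  define \<chi>2 where "\<chi>2 = pchar_M (asg A B (C ** T0))"
  have p2: "psl_rep_M \<phi> (asg A B (C ** T0))" using eps_CT0 by blast
  have dCT: "det (C ** T0) = 1" using C(1) T0(1) by (simp add: det_mult2)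
  have dist12: "\<chi>1 \<noteq> \<chi>2"
  proof
    assume eq: "\<chi>1 = \<chi>2"
    obtain Wm where Wm: "Wm \<in> {mat 1, A, B, A ** B, B ** A}" "(trace (T0 ** Wm))^2 \<noteq> (trace (T0 ** Wm ** C))^2"
      using dist[OF dA dB T0(1) C(1) CC C(4) C(5) C(6)] by blast
    obtain w where w: "surface_word w" "eval (asg A B T0) w = Wm" "eval (asg A B (C ** T0)) w = Wm"
    proof -
      have "\<exists>w. surface_word w \<and> eval (asg A B T0) w = Wm \<and> eval (asg A B (C ** T0)) w = Wm"
        using Wm(1)
      proof (elim insertE emptyE)
        assume "Wm = mat 1" then show ?thesis by (intro exI[of _ "[]"]) (simp add: surface_word_def letters_def)
      next
        assume "Wm = A" then show ?thesis by (intro exI[of _ "[(Ga,False)]"]) (simp add: surface_word_def letters_def)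
      next
        assume "Wm = B" then show ?thesis by (intro exI[of _ "[(Gb,False)]"]) (simp add: surface_word_def letters_def)
      next
        assume "Wm = A ** B" then show ?thesis by (intro exI[of _ "[(Ga,False),(Gb,False)]"]) (simp add: surface_word_def letters_def)
      next
        assume "Wm = B ** A" then show ?thesis by (intro exI[of _ "[(Gb,False),(Ga,False)]"]) (simp add: surface_word_def letters_def)
      qed
      then show ?thesis using that by blast
    qed
    have "\<chi>1 ((Gt,False) # w) = (trace (T0 ** Wm))^2" unfolding \<chi>1_def pchar_M_def using w(2) by simp
    moreover have "\<chi>2 ((Gt,False) # w) = (trace (T0 ** Wm ** C))^2"
    proof -
      have "trace (C ** T0 ** Wm) = trace (T0 ** Wm ** C)"
        using trace_cyc[of C "T0 ** Wm"] by (simp add: matrix_mul_assoc)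
      then show ?thesis unfolding \<chi>2_def pchar_M_def using w(3) by simp
    qed
    ultimately show False using eq Wm(2) by simp
  qed
  have fib: "fibre \<phi> (pchar_S A B) = {\<chi>1, \<chi>2}"
  proof
    show "fibre \<phi> (pchar_S A B) \<subseteq> {\<chi>1, \<chi>2}"
    proof
      fix c assume "c \<in> fibre \<phi> (pchar_S A B)"
      then obtain f where f: "psl_rep_M \<phi> f" "c = pchar_M f" "rbar c = pchar_S A B"
        unfolding fibre_def Xbar_M_def by blast
      obtain T h where T: "det T = 1" "psl_rep_M \<phi> (asg A B T)" "pchar_M (asg A B T) = pchar_M f"
        using norm_rep[OF irr dA dB f(1)] f unfolding rbar_def by blast
      have "T = T0 \<or> T = - T0 \<or> T = C ** T0 \<or> T = - (C ** T0)" using uniq[OF T(2)] .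
      then have "pchar_M (asg A B T) = \<chi>1 \<or> pchar_M (asg A B T) = \<chi>2"
        unfolding \<chi>1_def \<chi>2_def using pchar_asg_neg[OF dA dB] T0(1) dCT by auto
      then show "c \<in> {\<chi>1, \<chi>2}" using T(3) f(2) by auto
    qed
  next
    show "{\<chi>1, \<chi>2} \<subseteq> fibre \<phi> (pchar_S A B)"
      unfolding fibre_def Xbar_M_def rbar_def \<chi>1_def \<chi>2_def using T0(2) p2 restr_asg by blast
  qed
  have card_fib: "card (fibre \<phi> (pchar_S A B)) = 2" using fib dist12 by simp
  have u1: "T' = T0 \<or> T' = - T0" if "psl_rep_M \<phi> (asg A B T')" "pchar_M (asg A B T') = pchar_M (asg A B T0)" for T'
  proof -
    have "T' = T0 \<or> T' = - T0 \<or> T' = C ** T0 \<or> T' = - (C ** T0)" using uniq[OF that(1)] .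
    moreover have "T' \<noteq> C ** T0" "T' \<noteq> - (C ** T0)"
      using that(2) dist12 pchar_asg_neg[OF dA dB dCT] unfolding \<chi>1_def \<chi>2_def by auto
    ultimately show ?thesis by blast
  qed
  have u2: "T' = C ** T0 \<or> T' = - (C ** T0)" if "psl_rep_M \<phi> (asg A B T')" "pchar_M (asg A B T') = pchar_M (asg A B (C ** T0))" for T'
  proof -
    have "T' = T0 \<or> T' = - T0 \<or> T' = C ** T0 \<or> T' = - (C ** T0)" using uniq[OF that(1)] .
    moreover have "T' \<noteq> T0" "T' \<noteq> - T0"
      using that(2) dist12 pchar_asg_neg[OF dA dB T0(1)] unfolding \<chi>1_def \<chi>2_def by auto
    ultimately show ?thesis by blast
  qed
  define ea where "ea = epsv \<phi> (asg A B T0) Ga"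
  define eb where "eb = epsv \<phi> (asg A B T0) Gb"
  have L1: "lifts \<phi> \<chi>1 \<longleftrightarrow> (\<exists>da db. ea = (da \<noteq> ((da \<and> naa) \<noteq> (db \<and> nba))) \<and> eb = (db \<noteq> ((da \<and> nab) \<noteq> (db \<and> nbb))))"
    unfolding \<chi>1_def ea_def eb_def using lift_char[OF T0(2) u1] by blast
  have e2: "epsv \<phi> (asg A B (C ** T0)) Ga = (ea \<noteq> sig Ga)" "epsv \<phi> (asg A B (C ** T0)) Gb = (eb \<noteq> sig Gb)"
    using eps_CT0 unfolding ea_def eb_def by auto
  have L2: "lifts \<phi> \<chi>2 \<longleftrightarrow> (\<exists>da db. (ea \<noteq> sig Ga) = (da \<noteq> ((da \<and> naa) \<noteq> (db \<and> nba))) \<and> (eb \<noteq> sig Gb) = (db \<noteq> ((da \<and> nab) \<noteq> (db \<and> nbb))))"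
    unfolding \<chi>2_def using lift_char[OF p2 u2] e2 by simp
  have fa: "((sig Ga \<and> naa) \<noteq> (sig Gb \<and> nba)) = sig Ga" using fixed_sig[of Ga] wpar_phi[of Ga sig] by simp
  have fb: "((sig Ga \<and> nab) \<noteq> (sig Gb \<and> nbb)) = sig Gb" using fixed_sig[of Gb] wpar_phi[of Gb sig] by simp
  have hz: "hom_Z2 \<phi> = {(t, x, y). ((x \<and> naa) \<noteq> (y \<and> nba)) = x \<and> ((x \<and> nab) \<noteq> (y \<and> nbb)) = y}"
    using hom_Z2_eq[OF surfA surfB] .
  have lifted: "{c \<in> fibre \<phi> (pchar_S A B). lifts \<phi> c} =
      (if lifts \<phi> \<chi>1 then {\<chi>1} else {}) \<union> (if lifts \<phi> \<chi>2 then {\<chi>2} else {})"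
    unfolding fib by auto
  from bool_main[OF det_parity[OF adet] sig_nonzero fa fb, of ea eb]
  show ?thesis
  proof
    assume H: "naa \<and> \<not> nab \<and> \<not> nba \<and> nbb \<and>
     \<not> ((\<exists>da db. ea = (da \<noteq> ((da \<and> naa) \<noteq> (db \<and> nba))) \<and> eb = (db \<noteq> ((da \<and> nab) \<noteq> (db \<and> nbb)))) \<and>
        (\<exists>da db. (ea \<noteq> sig Ga) = (da \<noteq> ((da \<and> naa) \<noteq> (db \<and> nba))) \<and> (eb \<noteq> sig Gb) = (db \<noteq> ((da \<and> nab) \<noteq> (db \<and> nbb)))))"
    have n: "naa" "\<not> nab" "\<not> nba" "nbb" using H by blast+
    have "hom_Z2 \<phi> = {(t::bool, x::bool, y::bool). True}" unfolding hz using n by simp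
    then have "card (hom_Z2 \<phi>) = 2 ^ 3" using card_all by simp
    then have b3: "b1 \<phi> = 3" by (rule b1_eq)
    have nl: "\<not> ((\<exists>da db. ea = (da \<noteq> ((da \<and> naa) \<noteq> (db \<and> nba))) \<and> eb = (db \<noteq> ((da \<and> nab) \<noteq> (db \<and> nbb)))) \<and>
        (\<exists>da db. (ea \<noteq> sig Ga) = (da \<noteq> ((da \<and> naa) \<noteq> (db \<and> nba))) \<and> (eb \<noteq> sig Gb) = (db \<noteq> ((da \<and> nab) \<noteq> (db \<and> nbb)))))"
      using H by (elim conjE)
    have "\<not> (lifts \<phi> \<chi>1 \<and> lifts \<phi> \<chi>2)" by (simp only: L1 L2) (rule nl)
    then have D: "(\<forall>c\<in>fibre \<phi> (pchar_S A B). \<not> lifts \<phi> c) \<or> card {c\<in>fibre \<phi> (pchar_S A B). lifts \<phi> c} = 1"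
    proof (cases "lifts \<phi> \<chi>1"; cases "lifts \<phi> \<chi>2")
      assume "\<not> lifts \<phi> \<chi>1" "\<not> lifts \<phi> \<chi>2"
      then show ?thesis unfolding fib by blast
    next
      assume "lifts \<phi> \<chi>1" "\<not> lifts \<phi> \<chi>2"
      then have "{c\<in>fibre \<phi> (pchar_S A B). lifts \<phi> c} = {\<chi>1}" unfolding lifted by simp
      then show ?thesis by simp
    next
      assume "\<not> lifts \<phi> \<chi>1" "lifts \<phi> \<chi>2"
      then have "{c\<in>fibre \<phi> (pchar_S A B). lifts \<phi> c} = {\<chi>2}" unfolding lifted by simp
      then show ?thesis by simp
    qed (simp_all)
    have "1 < b1 \<phi>" using b3 by simp
    then show ?thesis using card_fib D b3 by blast
  next
    assume H: "\<not> (naa \<and> \<not> nab \<and> \<not> nba \<and> nbb) \<and>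
      (\<forall>x y. (((x \<and> naa) \<noteq> (y \<and> nba)) = x \<and> ((x \<and> nab) \<noteq> (y \<and> nbb)) = y) \<longleftrightarrow> (x, y) = (False, False) \<or> (x, y) = (sig Ga, sig Gb)) \<and>
      ((\<exists>da db. ea = (da \<noteq> ((da \<and> naa) \<noteq> (db \<and> nba))) \<and> eb = (db \<noteq> ((da \<and> nab) \<noteq> (db \<and> nbb)))) \<longleftrightarrow>
        (\<exists>da db. (ea \<noteq> sig Ga) = (da \<noteq> ((da \<and> naa) \<noteq> (db \<and> nba))) \<and> (eb \<noteq> sig Gb) = (db \<noteq> ((da \<and> nab) \<noteq> (db \<and> nbb)))))"
    have Qall: "\<forall>x y. (((x \<and> naa) \<noteq> (y \<and> nba)) = x \<and> ((x \<and> nab) \<noteq> (y \<and> nbb)) = y) \<longleftrightarrow> (x, y) = (False, False) \<or> (x, y) = (sig Ga, sig Gb)"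
      using H by (rule conjunct1[OF conjunct2])
    have Q: "(((x \<and> naa) \<noteq> (y \<and> nba)) = x \<and> ((x \<and> nab) \<noteq> (y \<and> nbb)) = y) \<longleftrightarrow> (x, y) = (False, False) \<or> (x, y) = (sig Ga, sig Gb)" for x y
      by (rule Qall[rule_format])
    have "hom_Z2 \<phi> = {(t::bool, x::bool, y::bool). (x, y) = (False, False) \<or> (x, y) = (sig Ga, sig Gb)}"
    proof (rule set_eqI)
      fix p :: "bool \<times> bool \<times> bool"
      obtain t x y where p: "p = (t, x, y)" by (cases p) auto
      show "p \<in> hom_Z2 \<phi> \<longleftrightarrow> p \<in> {(t::bool, x::bool, y::bool). (x, y) = (False, False) \<or> (x, y) = (sig Ga, sig Gb)}"
        unfolding hz p using Q[of x y] by simp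
    qed
    then have "card (hom_Z2 \<phi>) = 2 ^ 2" using card_two[OF sig_nonzero] by simp
    then have b2: "b1 \<phi> = 2" by (rule b1_eq)
    have ll: "(\<exists>da db. ea = (da \<noteq> ((da \<and> naa) \<noteq> (db \<and> nba))) \<and> eb = (db \<noteq> ((da \<and> nab) \<noteq> (db \<and> nbb)))) \<longleftrightarrow>
        (\<exists>da db. (ea \<noteq> sig Ga) = (da \<noteq> ((da \<and> naa) \<noteq> (db \<and> nba))) \<and> (eb \<noteq> sig Gb) = (db \<noteq> ((da \<and> nab) \<noteq> (db \<and> nbb))))"
      using H by (elim conjE)
    have "lifts \<phi> \<chi>1 \<longleftrightarrow> lifts \<phi> \<chi>2" by (simp only: L1 L2) (rule ll)
    then have D: "(\<forall>c\<in>fibre \<phi> (pchar_S A B). \<not> lifts \<phi> c) \<or> card {c\<in>fibre \<phi> (pchar_S A B). lifts \<phi> c} = 2"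
    proof (cases "lifts \<phi> \<chi>1")
      case True
      then have "{c\<in>fibre \<phi> (pchar_S A B). lifts \<phi> c} = {\<chi>1, \<chi>2}"
        using \<open>lifts \<phi> \<chi>1 \<longleftrightarrow> lifts \<phi> \<chi>2\<close> unfolding lifted by auto
      then show ?thesis using dist12 by simp
    next
      case False
      then show ?thesis using \<open>lifts \<phi> \<chi>1 \<longleftrightarrow> lifts \<phi> \<chi>2\<close> unfolding fib by blast
    qed
    have "1 < b1 \<phi>" using b2 by simp
    then show ?thesis using card_fib D b2 by blast
  qed
qed

end
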